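(* Let $R$ be a commutative ring with unit and $M$ an $R$-module, and assume one of: (a) $R$ is an integral domain and $M$ is a torsion-free $R$-module; (b) $R$ is a Dedekind domain; (c) $R$ is a reduced ring with finitely many minimal prime ideals and $M=R$. Let $\mathbf A$ be a $k\times l$ matrix with entries in $R$ and let $\mathbf b\in M^k$ be nonzero. Then the equation $\mathbf A\mathbf m=\mathbf b$ is partition regular over $M$ if and only if it has a constant solution in $M$, i.e. there is $m\in M$ with $\mathbf A(m,\dots,m)^{\intercal}=\mathbf b$.
   Context: The equation $\mathbf{A}\mathbf{m}=\mathbf b$ is partition regular over $M$ if for every $r\ge1$ and every map $\chi\colon M\to\{1,\dots,r\}$ there exists $\mathbf m=(m_1,\dots,m_l)^{\intercal}\in M^l$, not all $m_i$ zero, with $\mathbf{A}\mathbf{m}=\mathbf b$ and $\chi(m_1)=\dots=\chi(m_l)$. *)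

theory Defs
  imports Main "HOL.Modules"
begin

definition is_ideal :: "'a::comm_ring_1 set \<Rightarrow> bool" where
  "is_ideal I \<longleftrightarrow> 0 \<in> I \<and> (\<forall>x\<in>I. \<forall>y\<in>I. x + y \<in> I) \<and> (\<forall>r. \<forall>x\<in>I. r * x \<in> I)"

definition prime_ideal :: "'a::comm_ring_1 set \<Rightarrow> bool" where
  "prime_ideal P \<longleftrightarrow> is_ideal P \<and> P \<noteq> UNIV \<and> (\<forall>a b. a * b \<in> P \<longrightarrow> a \<in> P \<or> b \<in> P)"

definition maximal_ideal :: "'a::comm_ring_1 set \<Rightarrow> bool" where
  "maximal_ideal P \<longleftrightarrow> is_ideal P \<and> P \<noteq> UNIV \<and>
     (\<forall>J. is_ideal J \<and> P \<subseteq> J \<longrightarrow> J = P \<or> J = UNIV)"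

definition minimal_prime_ideal :: "'a::comm_ring_1 set \<Rightarrow> bool" where
  "minimal_prime_ideal P \<longleftrightarrow> prime_ideal P \<and> (\<forall>Q. prime_ideal Q \<and> Q \<subseteq> P \<longrightarrow> Q = P)"

definition reduced_ring :: "'a::comm_ring_1 itself \<Rightarrow> bool" where
  "reduced_ring _ \<longleftrightarrow> (\<forall>(x::'a) (n::nat). x ^ n = 0 \<longrightarrow> x = 0)"

definition integral_domain :: "'a::comm_ring_1 itself \<Rightarrow> bool" where
  "integral_domain _ \<longleftrightarrow> (\<forall>a b :: 'a. a * b = 0 \<longrightarrow> a = 0 \<or> b = 0)"
  (* 0 \<noteq> 1 is built into comm_ring_1 *)

definition noetherian_ring :: "'a::comm_ring_1 itself \<Rightarrow> bool" where
  "noetherian_ring _ \<longleftrightarrow> (\<forall>I :: 'a set. is_ideal I \<longrightarrow>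
      (\<exists>F. finite F \<and> F \<subseteq> I \<and> I = {\<Sum>f\<in>F. c f * f | c. True}))"

text \<open>Integrally closed (in the field of fractions), with fractions a/b written out:
  a/b (b \<noteq> 0) is a root of the monic polynomial X^n + \<Sum>_{i<n} c_i X^i iff
  a^n + \<Sum>_{i<n} c_i a^i b^(n-i) = 0, and a/b lies in R iff b divides a.\<close>
definition integrally_closed :: "'a::comm_ring_1 itself \<Rightarrow> bool" where
  "integrally_closed _ \<longleftrightarrow> (\<forall>(a::'a) b n c. b \<noteq> 0 \<longrightarrow>
      a ^ n + (\<Sum>i<n. c i * a ^ i * b ^ (n - i)) = 0 \<longrightarrow> b dvd a)"

definition dedekind_domain :: "'a::comm_ring_1 itself \<Rightarrow> bool" where
  "dedekind_domain T \<longleftrightarrow> integral_domain T \<and> noetherian_ring T \<and> integrally_closed T \<and>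
     (\<forall>P :: 'a set. prime_ideal P \<and> P \<noteq> {0} \<longrightarrow> maximal_ideal P)"

definition torsion_free :: "('a::comm_ring_1 \<Rightarrow> 'b::ab_group_add \<Rightarrow> 'b) \<Rightarrow> bool" where
  "torsion_free scale \<longleftrightarrow> (\<forall>r m. r \<noteq> 0 \<longrightarrow> m \<noteq> 0 \<longrightarrow> scale r m \<noteq> 0)"

definition solves ::
  "('a::comm_ring_1 \<Rightarrow> 'b::ab_group_add \<Rightarrow> 'b) \<Rightarrow> (nat \<Rightarrow> nat \<Rightarrow> 'a) \<Rightarrow> nat \<Rightarrow> nat
     \<Rightarrow> (nat \<Rightarrow> 'b) \<Rightarrow> (nat \<Rightarrow> 'b) \<Rightarrow> bool" where
  "solves scale A k l b m \<longleftrightarrow> (\<forall>i<k. (\<Sum>j<l. scale (A i j) (m j)) = b i)"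

definition partition_regular ::
  "('a::comm_ring_1 \<Rightarrow> 'b::ab_group_add \<Rightarrow> 'b) \<Rightarrow> (nat \<Rightarrow> nat \<Rightarrow> 'a) \<Rightarrow> nat \<Rightarrow> nat
     \<Rightarrow> (nat \<Rightarrow> 'b) \<Rightarrow> bool" where
  "partition_regular scale A k l b \<longleftrightarrow>
     (\<forall>(r::nat) (\<chi>::'b \<Rightarrow> nat). r \<ge> 1 \<longrightarrow> range \<chi> \<subseteq> {1..r} \<longrightarrow>
        (\<exists>m. solves scale A k l b m \<and> (\<exists>j<l. m j \<noteq> 0) \<and>
             (\<forall>j<l. \<forall>j'<l. \<chi> (m j) = \<chi> (m j'))))"

end

theory Submission
  imports Defs Complex_Main
begin

definition goodG :: "('b::ab_group_add \<times> real) set \<Rightarrow> bool" where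
  "goodG G \<longleftrightarrow> (0::'b) \<in> fst ` G \<and> (\<forall>x\<in>fst ` G. \<forall>y\<in>fst ` G. x + y \<in> fst ` G \<and> - x \<in> fst ` G) \<and>
     (\<forall>x u y v z w. (x,u)\<in>G \<longrightarrow> (y,v)\<in>G \<longrightarrow> (z,w)\<in>G \<longrightarrow> z = x + y \<longrightarrow> w - u - v \<in> \<int>)"

lemma goodG_add: "goodG G \<Longrightarrow> (x,u)\<in>G \<Longrightarrow> (y,v)\<in>G \<Longrightarrow> (x+y,w)\<in>G \<Longrightarrow> w - u - v \<in> \<int>"
  unfolding goodG_def by blast

lemma goodG_dom: "goodG G \<Longrightarrow> x \<in> fst ` G \<Longrightarrow> y \<in> fst ` G \<Longrightarrow> x + y \<in> fst ` G"
  "goodG G \<Longrightarrow> x \<in> fst ` G \<Longrightarrow> - x \<in> fst ` G" "goodG G \<Longrightarrow> 0 \<in> fst ` G"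
  unfolding goodG_def by blast+

lemma goodG_dom_diff: "goodG G \<Longrightarrow> x \<in> fst ` G \<Longrightarrow> y \<in> fst ` G \<Longrightarrow> x - y \<in> fst ` G"
  using goodG_dom(1)[of G x "-y"] goodG_dom(2)[of G y] by simp

lemma goodG_val: "goodG G \<Longrightarrow> x \<in> fst ` G \<Longrightarrow> \<exists>u. (x,u) \<in> G"
  by force

lemma Ints_cong_trans: "(a::real) - b \<in> \<int> \<Longrightarrow> b - c \<in> \<int> \<Longrightarrow> a - c \<in> \<int>"
  using Ints_add[of "a-b" "b-c"] by simp

lemma Ints_cong_sym: "(a::real) - b \<in> \<int> \<Longrightarrow> b - a \<in> \<int>"
  using Ints_minus[of "a-b"] by simp

lemma goodG_zero: "goodG G \<Longrightarrow> (0,e)\<in>G \<Longrightarrow> e \<in> \<int>"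
  using goodG_add[of G 0 e 0 e e] by simp

lemma goodG_same: "goodG G \<Longrightarrow> (x,u)\<in>G \<Longrightarrow> (x,u')\<in>G \<Longrightarrow> u' - u \<in> \<int>"
proof -
  assume g: "goodG G" and a: "(x,u)\<in>G" "(x,u')\<in>G"
  obtain e where e: "(0,e) \<in> G" using goodG_dom(3)[OF g] by force
  have "u' - u - e \<in> \<int>" using goodG_add[OF g a(1) e] a(2) by simp
  moreover have "e \<in> \<int>" using goodG_zero[OF g e] .
  ultimately show ?thesis using Ints_add[of "u' - u - e" e] by simp
qed

lemma goodG_add': "goodG G \<Longrightarrow> (x,u)\<in>G \<Longrightarrow> (y,v)\<in>G \<Longrightarrow> (z,w)\<in>G \<Longrightarrow> z = x + y \<Longrightarrow> w - u - v \<in> \<int>"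
  using goodG_add by blast

lemma goodG_diff: "goodG G \<Longrightarrow> (x,u)\<in>G \<Longrightarrow> (y,v)\<in>G \<Longrightarrow> (x-y,w)\<in>G \<Longrightarrow> w - (u - v) \<in> \<int>"
proof -
  assume g: "goodG G" and a: "(x,u)\<in>G" "(y,v)\<in>G" "(x-y,w)\<in>G"
  have "u - v - w \<in> \<int>" using goodG_add'[OF g a(2) a(3) a(1)] by simp
  then show ?thesis using Ints_cong_sym by simp
qed


definition zmul :: "('a::comm_ring_1 \<Rightarrow> 'b::ab_group_add \<Rightarrow> 'b) \<Rightarrow> int \<Rightarrow> 'b \<Rightarrow> 'b" where "zmul sc n x = sc (of_int n) x"

lemma zmul_simps: assumes "module sc" shows "zmul sc (a+b) x = zmul sc a x + zmul sc b x" "zmul sc 0 x = 0" "zmul sc 1 x = x"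
  "zmul sc (-a) x = - zmul sc a x" "zmul sc (a - b) x = zmul sc a x - zmul sc b x" "zmul sc (a*b) x = zmul sc a (zmul sc b x)"
proof -
  interpret module sc by fact
  show "zmul sc (a+b) x = zmul sc a x + zmul sc b x" "zmul sc 0 x = 0" "zmul sc 1 x = x"
  "zmul sc (-a) x = - zmul sc a x" "zmul sc (a - b) x = zmul sc a x - zmul sc b x" "zmul sc (a*b) x = zmul sc a (zmul sc b x)"
    unfolding zmul_def by (simp_all add: scale_left_distrib scale_left_diff_distrib)
qed

lemma zmul_dom_nat: "module sc \<Longrightarrow> goodG G \<Longrightarrow> x \<in> fst ` G \<Longrightarrow> zmul sc (int n) x \<in> fst ` G"
proof (induction n)
  case 0 then show ?case using goodG_dom(3) by (simp add: zmul_simps)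
next
  case (Suc n)
  have "zmul sc (int (Suc n)) x = zmul sc (int n) x + x" using zmul_simps(1)[OF Suc.prems(1), of "int n" 1 x] by (simp add: zmul_simps[OF Suc.prems(1)])
  then show ?case using goodG_dom(1)[OF Suc.prems(2) Suc.IH[OF Suc.prems] Suc.prems(3)] by simp
qed

lemma zmul_dom: assumes "module sc" "goodG G" "x \<in> fst ` G" shows "zmul sc n x \<in> fst ` G"
proof (cases "n \<ge> 0")
  case True
  define m where "m = nat n"
  have "n = int m" using True m_def by simp
  then show ?thesis using zmul_dom_nat assms by simp
next
  case False
  define m where "m = nat (-n)"
  have "n = - int m" using False m_def by simp
  then show ?thesis using zmul_dom_nat[of sc G x m] goodG_dom(2)[of G] assms by (simp add: zmul_simps)
qed

lemma zmul_val_nat: "module sc \<Longrightarrow> goodG G \<Longrightarrow> (y,v)\<in>G \<Longrightarrow> (zmul sc (int q) y, w) \<in> G \<Longrightarrow> w - of_int q * v \<in> \<int>"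
proof (induction q arbitrary: w)
  case 0 then show ?case using goodG_zero by (simp add: zmul_simps)
next
  case (Suc q)
  have yd: "y \<in> fst ` G" using Suc by force
  obtain w' where w': "(zmul sc (int q) y, w') \<in> G" using zmul_dom_nat[OF Suc.prems(1,2) yd] by force
  have ih: "w' - of_int q * v \<in> \<int>" using Suc.IH[OF Suc.prems(1,2,3) w'] .
  have eq: "zmul sc (int (Suc q)) y = zmul sc (int q) y + y" using zmul_simps(1)[OF Suc.prems(1), of "int q" 1 y] by (simp add: zmul_simps[OF Suc.prems(1)])
  have "w - w' - v \<in> \<int>" using goodG_add[OF Suc.prems(2) w' Suc.prems(3)] Suc.prems(4) eq by simp
  from Ints_add[OF this ih] show ?case by (simp add: algebra_simps)
qed

lemma zmul_val: assumes m: "module sc" and g: "goodG G" and a: "(y,v)\<in>G" "(zmul sc q y, w) \<in> G" shows "w - of_int q * v \<in> \<int>"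
proof (cases "q \<ge> 0")
  case True
  define m where "m = nat q"
  have "q = int m" using True m_def by simp
  then show ?thesis using zmul_val_nat assms by simp
next
  case False
  define m where "m = nat (-q)"
  have q: "q = - int m" using False m_def by simp
  have yd: "y \<in> fst ` G" using a by force
  obtain w' where w': "(zmul sc (int m) y, w') \<in> G" using zmul_dom_nat[OF m g yd] by force
  have 1: "w' - of_int m * v \<in> \<int>" using zmul_val_nat[OF m g a(1) w'] by simp
  obtain e where e: "(0,e) \<in> G" using goodG_dom(3)[OF g] by force
  have "e - w - w' \<in> \<int>" using goodG_add[OF g a(2) w'] e q by (simp add: zmul_simps[OF m])
  moreover have "e \<in> \<int>" using goodG_zero[OF g e] .
  ultimately have "w + w' \<in> \<int>" using Ints_diff[of e "e - w - w'"] by simp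
  from Ints_diff[OF this 1] show ?thesis using q by (simp add: algebra_simps)
qed


definition extG :: "('a::comm_ring_1 \<Rightarrow> 'b::ab_group_add \<Rightarrow> 'b) \<Rightarrow> ('b \<times> real) set \<Rightarrow> 'b \<Rightarrow> real \<Rightarrow> ('b \<times> real) set" where
  "extG sc G x t = {(h + zmul sc n x, u + of_int n * t) | h u n. (h,u) \<in> G}"

lemma extG_sub: assumes m: "module sc" shows "G \<subseteq> extG sc G x t"
proof
  fix p assume "p \<in> G"
  then obtain h u where "p = (h,u)" "(h,u) \<in> G" by (cases p) auto
  moreover have "(h + zmul sc 0 x, u + of_int 0 * t) \<in> extG sc G x t" unfolding extG_def using \<open>(h,u) \<in> G\<close> by blast
  ultimately show "p \<in> extG sc G x t" by (simp add: zmul_simps[OF m])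
qed

lemma extG_good:
  assumes m: "module sc" and g: "goodG G"
    and cond: "\<And>n h u. (h,u) \<in> G \<Longrightarrow> h = zmul sc n x \<Longrightarrow> of_int n * t - u \<in> \<int>"
  shows "goodG (extG sc G x t)"
proof -
  let ?E = "extG sc G x t"
  have memE: "(h + zmul sc n x, u + of_int n * t) \<in> ?E" if "(h,u) \<in> G" for h u n
    using that unfolding extG_def by blast
  have domE: "h + zmul sc n x \<in> fst ` ?E" if hG: "h \<in> fst ` G" for h n
  proof -
    obtain u where "(h,u) \<in> G" using hG by force
    from memE[OF this, of n] show ?thesis by force
  qed
  have 0: "0 \<in> fst ` ?E" using domE[OF goodG_dom(3)[OF g], of 0] by (simp add: zmul_simps[OF m])
  have cl: "a + b \<in> fst ` ?E \<and> - a \<in> fst ` ?E" if ab: "a \<in> fst ` ?E" "b \<in> fst ` ?E" for a b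
  proof -
    obtain h1 n1 where a: "a = h1 + zmul sc n1 x" "h1 \<in> fst ` G" using ab(1) unfolding extG_def by force
    obtain h2 n2 where b: "b = h2 + zmul sc n2 x" "h2 \<in> fst ` G" using ab(2) unfolding extG_def by force
    have "a + b = (h1 + h2) + zmul sc (n1 + n2) x" using a b by (simp add: zmul_simps[OF m] algebra_simps)
    moreover have "- a = (- h1) + zmul sc (- n1) x" using a by (simp add: zmul_simps[OF m] algebra_simps)
    ultimately show ?thesis using domE goodG_dom[OF g] a b by metis
  qed
  have add: "w - u - v \<in> \<int>" if tr: "(a,u) \<in> ?E" "(b,v) \<in> ?E" "(c,w) \<in> ?E" "c = a + b" for a b c u v w
  proof -
    obtain h1 u1 n1 where 1: "a = h1 + zmul sc n1 x" "u = u1 + of_int n1 * t" "(h1,u1) \<in> G" using tr(1) unfolding extG_def by blast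
    obtain h2 u2 n2 where 2: "b = h2 + zmul sc n2 x" "v = u2 + of_int n2 * t" "(h2,u2) \<in> G" using tr(2) unfolding extG_def by blast
    obtain h3 u3 n3 where 3: "c = h3 + zmul sc n3 x" "w = u3 + of_int n3 * t" "(h3,u3) \<in> G" using tr(3) unfolding extG_def by blast
    have d1: "h3 - h1 \<in> fst ` G" using goodG_dom_diff[OF g] 1 3 by force
    then obtain v' where v': "(h3 - h1, v') \<in> G" by force
    have d2: "h3 - h1 - h2 \<in> fst ` G" using goodG_dom_diff[OF g d1] 2 by force
    then obtain v0 where v: "(h3 - h1 - h2, v0) \<in> G" by force
    have e1: "u3 - u1 - v' \<in> \<int>" using goodG_add[OF g 1(3) v'] 3(3) by simp
    have e2: "v' - u2 - v0 \<in> \<int>" using goodG_add[OF g 2(3) v] v' by simp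
    have "h3 - h1 - h2 = zmul sc (n1 + n2 - n3) x" using tr(4) 1 2 3 by (simp add: zmul_simps[OF m] algebra_simps)
    from cond[OF v this] have e3: "of_int (n1 + n2 - n3) * t - v0 \<in> \<int>" .
    have "w - u - v = (u3 - u1 - v') + (v' - u2 - v0) + (v0 - of_int (n1 + n2 - n3) * t)" 
      using 1 2 3 by (simp add: algebra_simps)
    then show ?thesis using e1 e2 e3 by (metis Ints_add Ints_minus minus_diff_eq)
  qed
  show ?thesis unfolding goodG_def using 0 cl add by blast
qed

lemma extG_has: assumes m: "module sc" and g: "goodG G" shows "x \<in> fst ` extG sc G x t"
proof -
  obtain u where "(0,u) \<in> G" using goodG_dom(3)[OF g] by force
  then have "(0 + zmul sc 1 x, u + of_int 1 * t) \<in> extG sc G x t" unfolding extG_def by blast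
  then show ?thesis by (force simp: zmul_simps[OF m])
qed


lemma zmul_least:
  assumes m: "module sc" and g: "goodG G" and ex: "\<exists>n>0. zmul sc n x \<in> fst ` G"
  shows "\<exists>n0>0. zmul sc n0 x \<in> fst ` G \<and> (\<forall>n. zmul sc n x \<in> fst ` G \<longrightarrow> n0 dvd n)"
proof -
  let ?P = "\<lambda>k::nat. k > 0 \<and> zmul sc (int k) x \<in> fst ` G"
  obtain n where n: "n > 0" "zmul sc n x \<in> fst ` G" using ex by blast
  have "?P (nat n)" using n by simp
  then have P0: "?P (LEAST k. ?P k)" by (rule LeastI)
  define n0 where "n0 = int (LEAST k. ?P k)"
  have n0: "n0 > 0" "zmul sc n0 x \<in> fst ` G" using P0 n0_def by auto
  have mini: "\<not> (0 < k \<and> k < n0 \<and> zmul sc k x \<in> fst ` G)" for k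
  proof
    assume a: "0 < k \<and> k < n0 \<and> zmul sc k x \<in> fst ` G"
    then have "?P (nat k)" by simp
    then have "(LEAST k. ?P k) \<le> nat k" by (rule Least_le)
    then show False using a n0_def by linarith
  qed
  have "n0 dvd n" if nd: "zmul sc n x \<in> fst ` G" for n
  proof -
    have eq: "zmul sc (n mod n0) x = zmul sc n x - zmul sc (n div n0) (zmul sc n0 x)"
      using zmul_simps[OF m] by (metis add_diff_cancel_left' div_mult_mod_eq mult.commute)
    have "zmul sc (n div n0) (zmul sc n0 x) \<in> fst ` G" using zmul_dom[OF m g n0(2)] .
    then have "zmul sc (n mod n0) x \<in> fst ` G" using eq goodG_dom_diff[OF g nd] by simp
    moreover have "0 \<le> n mod n0" "n mod n0 < n0" using n0 by auto
    ultimately have "n mod n0 = 0" using mini[of "n mod n0"] by linarith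
    then show ?thesis by (simp add: dvd_eq_mod_eq_0)
  qed
  then show ?thesis using n0 by blast
qed

lemma zmul_none:
  assumes m: "module sc" and g: "goodG G" and ex: "\<not> (\<exists>n>0. zmul sc n x \<in> fst ` G)"
    and n: "zmul sc n x \<in> fst ` G"
  shows "n = 0"
proof (rule ccontr)
  assume "n \<noteq> 0"
  then consider "n > 0" | "-n > 0" by linarith
  then show False
  proof cases
    case 1 then show ?thesis using ex n by blast
  next
    case 2
    have "zmul sc (-n) x \<in> fst ` G" using goodG_dom(2)[OF g n] by (simp add: zmul_simps[OF m])
    then show ?thesis using ex 2 by blast
  qed
qed

lemma t_exists:
  assumes m: "module sc" and g: "goodG G"
  shows "\<exists>t. \<forall>n h u. (h,u) \<in> G \<longrightarrow> h = zmul sc n x \<longrightarrow> of_int n * t - u \<in> \<int>"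
proof (cases "\<exists>n>0. zmul sc n x \<in> fst ` G")
  case True
  from zmul_least[OF m g True] obtain n0 where n0: "n0 > 0" "zmul sc n0 x \<in> fst ` G"
    "\<And>n. zmul sc n x \<in> fst ` G \<Longrightarrow> n0 dvd n" by blast
  obtain v0 where v0: "(zmul sc n0 x, v0) \<in> G" using n0(2) by force
  show ?thesis
  proof (intro exI[of _ "v0 / of_int n0"] allI impI)
    fix n h u assume hu: "(h,u) \<in> G" "h = zmul sc n x"
    then have "h \<in> fst ` G" by force
    then have "n0 dvd n" using n0(3) hu(2) by simp
    then obtain q where q: "n = n0 * q" by (rule dvdE)
    have "h = zmul sc (q * n0) x" using hu(2) q by (simp add: mult.commute)
    then have "h = zmul sc q (zmul sc n0 x)" using zmul_simps(6)[OF m] by simp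
    then have "u - of_int q * v0 \<in> \<int>" using zmul_val[OF m g v0] hu(1) by simp
    moreover have "of_int n * (v0 / of_int n0) = of_int q * v0" using q n0(1) by simp
    ultimately show "of_int n * (v0 / of_int n0) - u \<in> \<int>" using Ints_cong_sym by simp
  qed
next
  case False
  show ?thesis
  proof (intro exI[of _ 0] allI impI)
    fix n h u assume hu: "(h,u) \<in> G" "h = zmul sc n x"
    then have "n = 0" using zmul_none[OF m g False] by force
    then have "h = 0" using hu zmul_simps[OF m] by simp
    then have "u \<in> \<int>" using goodG_zero[OF g] hu by simp
    then show "of_int n * 0 - u \<in> \<int>" by simp
  qed
qed

lemma between_not_Int: "0 < (t::real) \<Longrightarrow> t < 1 \<Longrightarrow> t \<notin> \<int>"
proof
  assume "0 < t" "t < 1" "t \<in> \<int>"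
  then obtain z where "t = of_int z" by (auto elim: Ints_cases)
  with \<open>0 < t\<close> \<open>t < 1\<close> show False by simp
qed

definition baseG :: "('a::comm_ring_1 \<Rightarrow> 'b::ab_group_add \<Rightarrow> 'b) \<Rightarrow> 'a \<Rightarrow> ('b \<times> real) set" where
  "baseG sc \<sigma> = {(sc \<sigma> y, of_int k) | y k. True}"

lemma baseG_good: assumes m: "module sc" shows "goodG (baseG sc \<sigma>)"
proof -
  interpret module sc by fact
  have d: "fst ` baseG sc \<sigma> = range (sc \<sigma>)" unfolding baseG_def by force
  have "0 \<in> range (sc \<sigma>)" by (metis rangeI scale_zero_right)
  moreover have "x + y \<in> range (sc \<sigma>) \<and> - x \<in> range (sc \<sigma>)" if "x \<in> range (sc \<sigma>)" "y \<in> range (sc \<sigma>)" for x y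
  proof -
    obtain a b where "x = sc \<sigma> a" "y = sc \<sigma> b" using \<open>x \<in> range (sc \<sigma>)\<close> \<open>y \<in> range (sc \<sigma>)\<close> by blast
    then have "x + y = sc \<sigma> (a + b)" "- x = sc \<sigma> (- a)" by (simp_all add: scale_right_distrib)
    then show ?thesis by (metis rangeI)
  qed
  moreover have "w - u - v \<in> \<int>" if "(x,u) \<in> baseG sc \<sigma>" "(y,v) \<in> baseG sc \<sigma>" "(z,w) \<in> baseG sc \<sigma>" for x y z u v w
    using that unfolding baseG_def by auto
  ultimately show ?thesis unfolding goodG_def d by blast
qed

lemma init_t:
  assumes m: "module sc" and c: "c \<notin> range (sc \<sigma>)"
  shows "\<exists>t. t \<notin> \<int> \<and> (\<forall>n h u. (h,u) \<in> baseG sc \<sigma> \<longrightarrow> h = zmul sc n c \<longrightarrow> of_int n * t - u \<in> \<int>)"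
proof -
  have g: "goodG (baseG sc \<sigma>)" by (rule baseG_good[OF m])
  have d: "fst ` baseG sc \<sigma> = range (sc \<sigma>)" unfolding baseG_def by force
  have vals: "u \<in> \<int>" if "(h,u) \<in> baseG sc \<sigma>" for h u using that unfolding baseG_def by auto
  show ?thesis
  proof (cases "\<exists>n>0. zmul sc n c \<in> fst ` baseG sc \<sigma>")
    case True
    from zmul_least[OF m g True] obtain n0 where n0: "n0 > 0" "zmul sc n0 c \<in> fst ` baseG sc \<sigma>"
      "\<And>n. zmul sc n c \<in> fst ` baseG sc \<sigma> \<Longrightarrow> n0 dvd n" by blast
    have "n0 \<noteq> 1" using n0(2) c d zmul_simps(3)[OF m] by auto
    then have n02: "n0 \<ge> 2" using n0(1) by linarith
    show ?thesis
    proof (intro exI[of _ "1 / of_int n0"] conjI allI impI)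
      have "0 < 1 / real_of_int n0" "1 / real_of_int n0 < 1" using n02 by auto
      then show "1 / real_of_int n0 \<notin> \<int>" by (rule between_not_Int)
    next
      fix n h u assume hu: "(h,u) \<in> baseG sc \<sigma>" "h = zmul sc n c"
      then have "h \<in> fst ` baseG sc \<sigma>" by force
      then have "n0 dvd n" using n0(3) hu(2) by simp
      then obtain q where q: "n = n0 * q" by (rule dvdE)
      have "of_int n * (1 / of_int n0) = (of_int q :: real)" using q n0(1) by simp
      then show "of_int n * (1 / of_int n0) - u \<in> \<int>" using vals[OF hu(1)] by simp
    qed
  next
    case False
    show ?thesis
    proof (intro exI[of _ "1/2"] conjI allI impI)
      show "(1/2::real) \<notin> \<int>" by (rule between_not_Int) auto
    next
      fix n h u assume hu: "(h,u) \<in> baseG sc \<sigma>" "h = zmul sc n c"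
      then have "n = 0" using zmul_none[OF m g False] by force
      then show "of_int n * (1/2) - u \<in> \<int>" using vals[OF hu(1)] by simp
    qed
  qed
qed

lemma goodG_chain_Union:
  assumes ch: "subset.chain \<A> \<C>" and ne: "\<C> \<noteq> {}" and good: "\<And>G. G \<in> \<C> \<Longrightarrow> goodG G"
  shows "goodG (\<Union>\<C>)"
proof -
  have common: "\<exists>B\<in>\<C>. F \<subseteq> B" if "finite F" "F \<subseteq> \<Union>\<C>" for F
    using finite_subset_Union_chain[OF that ne ch] by blast
  obtain G0 where G0: "G0 \<in> \<C>" using ne by blast
  have "0 \<in> fst ` G0" using goodG_dom(3)[OF good[OF G0]] .
  then have z: "0 \<in> fst ` \<Union>\<C>" using G0 by blast
  have cl: "x + y \<in> fst ` \<Union>\<C> \<and> - x \<in> fst ` \<Union>\<C>" if "x \<in> fst ` \<Union>\<C>" "y \<in> fst ` \<Union>\<C>" for x y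
  proof -
    obtain u v where uv: "(x,u) \<in> \<Union>\<C>" "(y,v) \<in> \<Union>\<C>" using \<open>x \<in> fst ` \<Union>\<C>\<close> \<open>y \<in> fst ` \<Union>\<C>\<close> by force
    have "{(x,u),(y,v)} \<subseteq> \<Union>\<C>" using uv by auto
    then obtain B where B: "B \<in> \<C>" "{(x,u),(y,v)} \<subseteq> B" using common[of "{(x,u),(y,v)}"] by auto
    have "x \<in> fst ` B" "y \<in> fst ` B" using B by force+
    then have "x + y \<in> fst ` B" "- x \<in> fst ` B" using goodG_dom[OF good[OF B(1)]] by blast+
    then show ?thesis using B(1) by blast
  qed
  have add: "w - u - v \<in> \<int>" if tr: "(x,u) \<in> \<Union>\<C>" "(y,v) \<in> \<Union>\<C>" "(z,w) \<in> \<Union>\<C>" "z = x + y" for x y z u v w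
  proof -
    have "{(x,u),(y,v),(z,w)} \<subseteq> \<Union>\<C>" using tr by auto
    then obtain B where B: "B \<in> \<C>" "{(x,u),(y,v),(z,w)} \<subseteq> B" using common[of "{(x,u),(y,v),(z,w)}"] by auto
    then show ?thesis using goodG_add[OF good[OF B(1)]] tr(4) by auto
  qed
  show ?thesis unfolding goodG_def
  proof (intro conjI ballI allI impI)
    show "0 \<in> fst ` \<Union>\<C>" by (rule z)
  next
    fix x y assume xy: "x \<in> fst ` \<Union>\<C>" "y \<in> fst ` \<Union>\<C>"
    show "x + y \<in> fst ` \<Union>\<C>" using cl[OF xy] by (rule conjunct1)
    show "- x \<in> fst ` \<Union>\<C>" using cl[OF xy] by (rule conjunct2)
  next
    fix x u y v z w assume tr: "(x,u) \<in> \<Union>\<C>" "(y,v) \<in> \<Union>\<C>" "(z,w) \<in> \<Union>\<C>" "z = x + y"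
    show "w - u - v \<in> \<int>" by (rule add[OF tr])
  qed
qed

lemma character_exists:
  assumes m: "module sc" and c: "c \<notin> range (sc \<sigma>)"
  shows "\<exists>\<chi>::'b::ab_group_add \<Rightarrow> real. (\<forall>x y. \<chi> (x + y) - \<chi> x - \<chi> y \<in> \<int>) \<and> (\<forall>y. \<chi> (sc \<sigma> y) \<in> \<int>) \<and> \<chi> c \<notin> \<int>"
proof -
  obtain t where t: "t \<notin> \<int>" "\<And>n h u. (h,u) \<in> baseG sc \<sigma> \<Longrightarrow> h = zmul sc n c \<Longrightarrow> of_int n * t - u \<in> \<int>"
    using init_t[OF m c] by blast
  define G1 where "G1 = extG sc (baseG sc \<sigma>) c t"
  have g1: "goodG G1" unfolding G1_def by (rule extG_good[OF m baseG_good[OF m] t(2)])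
  define \<A> where "\<A> = {G. goodG G \<and> G1 \<subseteq> G}"
  have "\<exists>M\<in>\<A>. \<forall>X\<in>\<A>. M \<subseteq> X \<longrightarrow> X = M"
  proof (rule subset_Zorn_nonempty)
    show "\<A> \<noteq> {}" using g1 unfolding \<A>_def by blast
    fix \<C> assume "\<C> \<noteq> {}" "subset.chain \<A> \<C>"
    have sub: "\<C> \<subseteq> \<A>" using \<open>subset.chain \<A> \<C>\<close> unfolding subset.chain_def by simp
    have "goodG (\<Union>\<C>)"
    proof (rule goodG_chain_Union[of \<A> \<C>])
      show "subset.chain \<A> \<C>" "\<C> \<noteq> {}" by fact+
      fix G assume "G \<in> \<C>" then show "goodG G" using sub unfolding \<A>_def by auto
    qed
    moreover obtain G where "G \<in> \<C>" using \<open>\<C> \<noteq> {}\<close> by blast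
    then have "G1 \<subseteq> \<Union>\<C>" using sub unfolding \<A>_def by auto
    ultimately show "\<Union>\<C> \<in> \<A>" unfolding \<A>_def by blast
  qed
  then obtain Gm where GmA: "Gm \<in> \<A>" and maxA: "\<forall>X\<in>\<A>. Gm \<subseteq> X \<longrightarrow> X = Gm" by blast
  have Gm: "goodG Gm" "G1 \<subseteq> Gm" using GmA unfolding \<A>_def by simp_all
  have maxi: "X = Gm" if "goodG X" "G1 \<subseteq> X" "Gm \<subseteq> X" for X
  proof -
    have "X \<in> \<A>" using that unfolding \<A>_def by simp
    then show ?thesis using maxA that(3) by blast
  qed
  have full: "x \<in> fst ` Gm" for x
  proof -
    obtain t' where t': "\<And>n h u. (h,u) \<in> Gm \<Longrightarrow> h = zmul sc n x \<Longrightarrow> of_int n * t' - u \<in> \<int>"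
      using t_exists[OF m Gm(1), of x] by blast
    have "goodG (extG sc Gm x t')" using extG_good[OF m Gm(1) t'] .
    moreover have "Gm \<subseteq> extG sc Gm x t'" by (rule extG_sub[OF m])
    moreover have "G1 \<subseteq> extG sc Gm x t'" using Gm(2) \<open>Gm \<subseteq> extG sc Gm x t'\<close> by blast
    ultimately have "extG sc Gm x t' = Gm" using maxi by blast
    then show ?thesis using extG_has[OF m Gm(1), of x t'] by simp
  qed
  define \<chi> where "\<chi> x = (SOME u. (x,u) \<in> Gm)" for x
  have chi: "(x, \<chi> x) \<in> Gm" for x
  proof -
    obtain u where "(x,u) \<in> Gm" using full[of x] by force
    then show ?thesis unfolding \<chi>_def by (rule someI)
  qed
  have 1: "\<chi> (x + y) - \<chi> x - \<chi> y \<in> \<int>" for x y using goodG_add[OF Gm(1) chi chi chi] .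
  have 2: "\<chi> (sc \<sigma> y) \<in> \<int>" for y
  proof -
    have "(sc \<sigma> y, of_int 0) \<in> baseG sc \<sigma>" unfolding baseG_def by blast
    then have "(sc \<sigma> y, 0) \<in> Gm" using extG_sub[OF m, of "baseG sc \<sigma>" c t] Gm(2) unfolding G1_def by auto
    from goodG_same[OF Gm(1) this chi] show ?thesis by simp
  qed
  have 3: "\<chi> c \<notin> \<int>"
  proof
    assume a: "\<chi> c \<in> \<int>"
    have "(sc \<sigma> 0, of_int 0) \<in> baseG sc \<sigma>" unfolding baseG_def by blast
    moreover have "sc \<sigma> 0 = 0" using m by (simp add: module.scale_zero_right)
    ultimately have "(0, 0) \<in> baseG sc \<sigma>" by simp
    then have "(0 + zmul sc 1 c, 0 + of_int 1 * t) \<in> G1" unfolding G1_def extG_def by blast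
    then have "(c, t) \<in> Gm" using Gm(2) zmul_simps(3)[OF m] by auto
    from goodG_same[OF Gm(1) this chi] have "\<chi> c - t \<in> \<int>" .
    then have "t \<in> \<int>" using a Ints_diff[of "\<chi> c" "\<chi> c - t"] by simp
    then show False using t(1) by simp
  qed
  show ?thesis using 1 2 3 by blast
qed


lemma addmodZ_sum:
  fixes n :: nat and \<phi> :: "'b::ab_group_add \<Rightarrow> real"
  assumes ad: "\<forall>x y. \<phi> (x + y) - \<phi> x - \<phi> y \<in> \<int>"
  shows "\<phi> (\<Sum>j<n. g j) - (\<Sum>j<n. \<phi> (g j)) \<in> \<int>"
proof (induction n)
  case 0
  have "\<phi> (0 + 0) - \<phi> 0 - \<phi> 0 \<in> \<int>" using ad by blast
  then have "- \<phi> 0 \<in> \<int>" by simp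
  then show ?case by simp
next
  case (Suc n)
  have "\<phi> ((\<Sum>j<n. g j) + g n) - \<phi> (\<Sum>j<n. g j) - \<phi> (g n) \<in> \<int>" using ad by blast
  from Ints_add[OF this Suc.IH] show ?case by (simp add: algebra_simps)
qed

lemma frac_diff_Ints: "frac (y::real) - y \<in> \<int>"
  by (simp add: frac_def)

lemma straus:
  fixes sc :: "'a::comm_ring_1 \<Rightarrow> 'b::ab_group_add \<Rightarrow> 'b" and l :: nat
  assumes m: "module sc" and c: "c \<notin> range (sc (\<Sum>j<l. a j))"
  shows "\<exists>(r::nat) (\<chi>::'b \<Rightarrow> nat). r \<ge> 1 \<and> range \<chi> \<subseteq> {1..r} \<and>
     (\<forall>x. (\<Sum>j<l. sc (a j) (x j)) = c \<longrightarrow> \<not> (\<forall>j<l. \<forall>j'<l. \<chi> (x j) = \<chi> (x j')))"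
proof -
  interpret module sc by fact
  define \<sigma> where "\<sigma> = (\<Sum>j<l. a j)"
  obtain \<phi> :: "'b \<Rightarrow> real" where ad: "\<forall>x y. \<phi> (x + y) - \<phi> x - \<phi> y \<in> \<int>"
    and sg: "\<forall>y. \<phi> (sc \<sigma> y) \<in> \<int>" and pc: "\<phi> c \<notin> \<int>"
    using character_exists[OF m c] unfolding \<sigma>_def by blast
  define f where "f = frac (\<phi> c)"
  have "f \<noteq> 0" using pc unfolding f_def by (simp add: frac_eq_0_iff)
  then have f01: "0 < f" "f < 1" unfolding f_def using frac_ge_0[of "\<phi> c"] frac_lt_1[of "\<phi> c"] by (simp_all add: less_le f_def)
  define \<delta> where "\<delta> = min f (1 - f)"
  have dpos: "\<delta> > 0" using f01 unfolding \<delta>_def by simp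
  obtain N :: nat where N: "real l / \<delta> < real N" using reals_Archimedean2 by blast
  have "0 \<le> real l / \<delta>" using dpos by simp
  then have "real N > 0" using N by linarith
  then have N1: "N \<ge> 1" by simp
  have lN: "real l / real N < \<delta>" using N dpos N1 by (simp add: divide_less_eq mult.commute pos_divide_less_eq)
  define col where "col x = map (\<lambda>j. nat \<lfloor>real N * frac (\<phi> (sc (a j) x))\<rfloor>) [0..<l]" for x
  define C where "C = {xs. set xs \<subseteq> {0..<N} \<and> length xs = l}"
  have finC: "finite C" unfolding C_def by (rule finite_lists_length_eq) simp
  have colC: "col x \<in> C" for x
  proof -
    have "nat \<lfloor>real N * frac (\<phi> (sc (a j) x))\<rfloor> < N" for j
    proof -
      have "real N * frac (\<phi> (sc (a j) x)) < real N" using N1 frac_lt_1 by simp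
      then show ?thesis by (simp add: floor_less_iff nat_less_iff)
    qed
    then show ?thesis unfolding col_def C_def by auto
  qed
  have repC: "replicate l 0 \<in> C" unfolding C_def using N1 by auto
  obtain e where e: "bij_betw e C {0..<card C}" using ex_bij_betw_finite_nat[OF finC] by blast
  define \<chi> where "\<chi> x = e (col x) + 1" for x
  have r1: "card C \<ge> 1" using repC finC by (metis One_nat_def Suc_leI card_gt_0_iff empty_iff)
  have rng: "range \<chi> \<subseteq> {1..card C}"
  proof
    fix y assume "y \<in> range \<chi>"
    then obtain x where "y = \<chi> x" by blast
    moreover have "e (col x) < card C" using e colC[of x] unfolding bij_betw_def by auto
    ultimately show "y \<in> {1..card C}" unfolding \<chi>_def by auto
  qed
  have nomono: "\<not> (\<forall>j<l. \<forall>j'<l. \<chi> (x j) = \<chi> (x j'))" if sol: "(\<Sum>j<l. sc (a j) (x j)) = c" for x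
  proof
    assume mono: "\<forall>j<l. \<forall>j'<l. \<chi> (x j) = \<chi> (x j')"
    have lpos: "l > 0"
    proof (rule ccontr)
      assume "\<not> l > 0" then have "l = 0" by simp
      then have "c = sc \<sigma> 0" using sol unfolding \<sigma>_def by simp
      then show False using c unfolding \<sigma>_def by blast
    qed
    have coleq: "col (x j) = col (x 0)" if "j < l" for j
    proof -
      have "\<chi> (x j) = \<chi> (x 0)" using mono that lpos by blast
      then have "e (col (x j)) = e (col (x 0))" unfolding \<chi>_def by simp
      moreover have "inj_on e C" using e by (simp add: bij_betw_def)
      ultimately show ?thesis using inj_onD colC by metis
    qed
    define d where "d j = frac (\<phi> (sc (a j) (x j))) - frac (\<phi> (sc (a j) (x 0)))" for j
    have dsmall: "\<bar>d j\<bar> < 1 / real N" if "j < l" for j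
    proof -
      have "col (x j) ! j = col (x 0) ! j" using coleq[OF that] by simp
      then have fl: "\<lfloor>real N * frac (\<phi> (sc (a j) (x j)))\<rfloor> = \<lfloor>real N * frac (\<phi> (sc (a j) (x 0)))\<rfloor>"
      proof -
        have "nat \<lfloor>real N * frac (\<phi> (sc (a j) (x j)))\<rfloor> = nat \<lfloor>real N * frac (\<phi> (sc (a j) (x 0)))\<rfloor>"
          using \<open>col (x j) ! j = col (x 0) ! j\<close> that unfolding col_def by simp
        moreover have "0 \<le> \<lfloor>real N * frac (\<phi> (sc (a j) (x j)))\<rfloor>" "0 \<le> \<lfloor>real N * frac (\<phi> (sc (a j) (x 0)))\<rfloor>"
          by (simp_all add: frac_ge_0)
        ultimately show ?thesis by (metis nat_eq_iff2)
      qed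
      have "\<bar>real N * frac (\<phi> (sc (a j) (x j))) - real N * frac (\<phi> (sc (a j) (x 0)))\<bar> < 1"
        using fl by linarith
      then have "real N * \<bar>d j\<bar> < 1" unfolding d_def
        by (metis abs_mult abs_of_nat right_diff_distrib)
      then show ?thesis using N1 by (simp add: field_simps)
    qed
    define E where "E = (\<Sum>j<l. d j)"
    have "\<bar>E\<bar> \<le> (\<Sum>j<l. \<bar>d j\<bar>)" unfolding E_def by (rule sum_abs)
    also have "\<dots> < (\<Sum>j<l. 1 / real N)" using lpos by (intro sum_strict_mono) (auto intro: dsmall)
    also have "\<dots> = real l / real N" by simp
    finally have Esmall: "\<bar>E\<bar> < \<delta>" using lN by simp
    have i1: "\<phi> c - (\<Sum>j<l. \<phi> (sc (a j) (x j))) \<in> \<int>" using addmodZ_sum[OF ad, of "\<lambda>j. sc (a j) (x j)" l] sol by simp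
    have "(\<Sum>j<l. sc (a j) (x 0)) = sc \<sigma> (x 0)" unfolding \<sigma>_def by (simp add: scale_sum_left)
    then have A: "\<phi> (\<Sum>j<l. sc (a j) (x 0)) \<in> \<int>" using sg by simp
    have i2: "(\<Sum>j<l. \<phi> (sc (a j) (x 0))) \<in> \<int>"
      using Ints_diff[OF A addmodZ_sum[OF ad, of "\<lambda>j. sc (a j) (x 0)" l]] by simp
    have i3: "(\<Sum>j<l. frac (\<phi> (sc (a j) (x j)))) - (\<Sum>j<l. \<phi> (sc (a j) (x j))) \<in> \<int>"
      using frac_diff_Ints by (simp add: sum_subtractf[symmetric] Ints_sum)
    have i4: "(\<Sum>j<l. frac (\<phi> (sc (a j) (x 0)))) - (\<Sum>j<l. \<phi> (sc (a j) (x 0))) \<in> \<int>"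
      using frac_diff_Ints by (simp add: sum_subtractf[symmetric] Ints_sum)
    have Eeq: "E = ((\<Sum>j<l. frac (\<phi> (sc (a j) (x j)))) - (\<Sum>j<l. \<phi> (sc (a j) (x j))))
       + (\<Sum>j<l. \<phi> (sc (a j) (x j))) - ((\<Sum>j<l. frac (\<phi> (sc (a j) (x 0)))) - (\<Sum>j<l. \<phi> (sc (a j) (x 0))))
       - (\<Sum>j<l. \<phi> (sc (a j) (x 0)))"
      unfolding E_def d_def by (simp add: sum_subtractf)
    have i5: "f - \<phi> c \<in> \<int>" unfolding f_def by (rule frac_diff_Ints)
    have "f - E = (f - \<phi> c) + (\<phi> c - (\<Sum>j<l. \<phi> (sc (a j) (x j))))
       - ((\<Sum>j<l. frac (\<phi> (sc (a j) (x j)))) - (\<Sum>j<l. \<phi> (sc (a j) (x j))))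
       + ((\<Sum>j<l. frac (\<phi> (sc (a j) (x 0)))) - (\<Sum>j<l. \<phi> (sc (a j) (x 0))))
       + (\<Sum>j<l. \<phi> (sc (a j) (x 0)))" (is "_ = ?X") using Eeq by simp
    moreover have "(f - \<phi> c) + (\<phi> c - (\<Sum>j<l. \<phi> (sc (a j) (x j))))
       - ((\<Sum>j<l. frac (\<phi> (sc (a j) (x j)))) - (\<Sum>j<l. \<phi> (sc (a j) (x j))))
       + ((\<Sum>j<l. frac (\<phi> (sc (a j) (x 0)))) - (\<Sum>j<l. \<phi> (sc (a j) (x 0))))
       + (\<Sum>j<l. \<phi> (sc (a j) (x 0))) \<in> \<int>"
      by (intro Ints_add Ints_diff i1 i2 i3 i4 i5)
    ultimately have "f - E \<in> \<int>" by (simp only:)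
    moreover have "0 < f - E" "f - E < 1" using Esmall f01 unfolding \<delta>_def by auto
    ultimately show False using between_not_Int by blast
  qed
  show ?thesis using r1 rng nomono by blast
qed

lemma PR_N:
  fixes sc :: "'a::comm_ring_1 \<Rightarrow> 'b::ab_group_add \<Rightarrow> 'b"
  assumes m: "module sc" and pr: "partition_regular sc A k l b"
  shows "(\<Sum>i<k. sc (u i) (b i)) \<in> range (sc (\<Sum>i<k. u i * (\<Sum>j<l. A i j)))"
proof (rule ccontr)
  interpret module sc by fact
  assume nc: "(\<Sum>i<k. sc (u i) (b i)) \<notin> range (sc (\<Sum>i<k. u i * (\<Sum>j<l. A i j)))"
  define a where "a j = (\<Sum>i<k. u i * A i j)" for j
  have sa: "(\<Sum>j<l. a j) = (\<Sum>i<k. u i * (\<Sum>j<l. A i j))"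
    unfolding a_def by (simp add: sum_distrib_left sum.swap[of _ "{..<l}"])
  obtain r \<chi> where r: "(r::nat) \<ge> 1" "range (\<chi>::'b \<Rightarrow> nat) \<subseteq> {1..r}"
    and nm: "\<And>x. (\<Sum>j<l. sc (a j) (x j)) = (\<Sum>i<k. sc (u i) (b i)) \<Longrightarrow> \<not> (\<forall>j<l. \<forall>j'<l. \<chi> (x j) = \<chi> (x j'))"
    using straus[OF m, where c = "\<Sum>i<k. sc (u i) (b i)" and l = l and a = a] nc sa by auto
  obtain x where x: "solves sc A k l b x" "\<forall>j<l. \<forall>j'<l. \<chi> (x j) = \<chi> (x j')"
    using pr r unfolding partition_regular_def by blast
  have "(\<Sum>j<l. sc (a j) (x j)) = (\<Sum>j<l. \<Sum>i<k. sc (u i) (sc (A i j) (x j)))"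
    unfolding a_def by (simp add: scale_sum_left)
  also have "\<dots> = (\<Sum>i<k. sc (u i) (\<Sum>j<l. sc (A i j) (x j)))"
    by (simp add: scale_sum_right sum.swap[of _ "{..<l}"])
  also have "\<dots> = (\<Sum>i<k. sc (u i) (b i))"
    using x(1) unfolding solves_def by simp
  finally show False using nm x(2) by blast
qed

lemma N_two:
  fixes sc :: "'a::comm_ring_1 \<Rightarrow> 'b::ab_group_add \<Rightarrow> 'b" and k :: nat
  assumes m: "module sc"
    and N: "\<And>u. (\<Sum>i<k. sc (u i) (b i)) \<in> range (sc (\<Sum>i<k. u i * s i))"
    and i: "i1 < k" "i2 < k"
  shows "sc \<alpha> (b i1) + sc \<beta> (b i2) \<in> range (sc (\<alpha> * s i1 + \<beta> * s i2))"
proof -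
  interpret module sc by fact
  define u where "u i = (if i = i1 then \<alpha> else 0) + (if i = i2 then \<beta> else 0)" for i
  have "(\<Sum>i<k. sc (u i) (b i)) = (\<Sum>i<k. (if i = i1 then sc \<alpha> (b i) else 0) + (if i = i2 then sc \<beta> (b i) else 0))"
    unfolding u_def by (intro sum.cong refl) (simp add: scale_left_distrib)
  also have "\<dots> = sc \<alpha> (b i1) + sc \<beta> (b i2)" using i by (simp add: sum.distrib)
  finally have 1: "(\<Sum>i<k. sc (u i) (b i)) = sc \<alpha> (b i1) + sc \<beta> (b i2)" .
  have 2: "(\<Sum>i<k. u i * s i) = \<alpha> * s i1 + \<beta> * s i2"
    unfolding u_def using i by (simp add: distrib_right sum.distrib if_distrib[of "\<lambda>x. x * _"] sum.delta cong: if_cong)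
  show ?thesis using N[of u] 1 2 by simp
qed

lemma case_a:
  fixes sc :: "'a::comm_ring_1 \<Rightarrow> 'b::ab_group_add \<Rightarrow> 'b" and k :: nat
  assumes m: "module sc" and dom: "integral_domain TYPE('a)" and tf: "torsion_free sc"
    and N: "\<And>u. (\<Sum>i<k. sc (u i) (b i)) \<in> range (sc (\<Sum>i<k. u i * s i))"
    and b: "\<exists>i<k. b i \<noteq> 0"
  shows "\<exists>x. \<forall>i<k. sc (s i) x = b i"
proof -
  interpret module sc by fact
  have single: "b i \<in> range (sc (s i))" if "i < k" for i
    using N_two[OF m N that that, of 1 0] by simp
  show ?thesis
  proof (cases "\<forall>i<k. s i = 0")
    case True
    obtain i0 where "i0 < k" "b i0 \<noteq> 0" using b by blast
    then show ?thesis using single[of i0] True by auto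
  next
    case False
    then obtain i0 where i0: "i0 < k" "s i0 \<noteq> 0" by blast
    obtain x where x: "b i0 = sc (s i0) x" using single[OF i0(1)] by blast
    have "sc (s i) x = b i" if i: "i < k" for i
    proof -
      have "sc (s i) (b i0) + sc (- s i0) (b i) \<in> range (sc (s i * s i0 + - s i0 * s i))"
        using N_two[OF m N i0(1) i] .
      then have "sc (s i) (b i0) - sc (s i0) (b i) = 0" by (auto simp: mult.commute)
      then have "sc (s i0) (sc (s i) x - b i) = 0" using x
        by (simp add: scale_right_diff_distrib mult.commute)
      then show ?thesis using tf i0(2) unfolding torsion_free_def by (metis eq_iff_diff_eq_0)
    qed
    then show ?thesis by blast
  qed
qed

lemma module_mult: "module ((*) :: 'a::comm_ring_1 \<Rightarrow> 'a \<Rightarrow> 'a)"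
  by unfold_locales (simp_all add: algebra_simps)

lemma ideal_0: "is_ideal I \<Longrightarrow> 0 \<in> I" unfolding is_ideal_def by blast
lemma ideal_add: "is_ideal I \<Longrightarrow> x \<in> I \<Longrightarrow> y \<in> I \<Longrightarrow> x + y \<in> I" unfolding is_ideal_def by blast
lemma ideal_mult: "is_ideal I \<Longrightarrow> x \<in> I \<Longrightarrow> r * x \<in> I" unfolding is_ideal_def by blast
lemma ideal_mult2: "is_ideal I \<Longrightarrow> x \<in> I \<Longrightarrow> x * r \<in> I" unfolding is_ideal_def by (metis mult.commute)
lemma ideal_minus: "is_ideal I \<Longrightarrow> x \<in> I \<Longrightarrow> - x \<in> I"
  using ideal_mult[of I x "-1"] by simp
lemma ideal_diff: "is_ideal I \<Longrightarrow> x \<in> I \<Longrightarrow> y \<in> I \<Longrightarrow> x - y \<in> I"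
  using ideal_add[of I x "-y"] ideal_minus[of I y] by simp
lemma ideal_sum: "is_ideal I \<Longrightarrow> (\<And>x. x \<in> S \<Longrightarrow> g x \<in> I) \<Longrightarrow> sum g S \<in> I"
proof (induction S rule: infinite_finite_induct)
  case (infinite A) then show ?case by (simp add: ideal_0)
next
  case empty then show ?case by (simp add: ideal_0)
next
  case (insert x F) then show ?case by (simp add: ideal_add)
qed
lemma ideal_UNIV: "is_ideal I \<Longrightarrow> 1 \<in> I \<Longrightarrow> I = UNIV"
  using ideal_mult[of I 1] by auto

lemma prime_idealD: "prime_ideal P \<Longrightarrow> a * b \<in> P \<Longrightarrow> a \<in> P \<or> b \<in> P"
  unfolding prime_ideal_def by blast
lemma prime_ideal_ideal: "prime_ideal P \<Longrightarrow> is_ideal P" unfolding prime_ideal_def by blast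
lemma prime_ideal_one: "prime_ideal P \<Longrightarrow> 1 \<notin> P"
  unfolding prime_ideal_def using ideal_UNIV by blast

lemma prime_prod_notin: assumes "prime_ideal P" shows "finite S \<Longrightarrow> (\<And>x. x \<in> S \<Longrightarrow> g x \<notin> P) \<Longrightarrow> prod g S \<notin> P"
proof (induction S rule: finite_induct)
  case empty then show ?case using prime_ideal_one[OF assms] by simp
next
  case (insert x F)
  then show ?case using prime_idealD[OF assms, of "g x" "prod g F"] by auto
qed

lemma prod_in_ideal: "is_ideal P \<Longrightarrow> finite S \<Longrightarrow> a \<in> S \<Longrightarrow> g a \<in> P \<Longrightarrow> prod g S \<in> P"
  by (simp add: prod.remove ideal_mult2)

lemma pow_notin_ideal_1: "is_ideal I \<Longrightarrow> (\<forall>n. y ^ n \<notin> I) \<Longrightarrow> I \<noteq> UNIV"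
  by (metis UNIV_I)

definition ideal_plus :: "'a::comm_ring_1 set \<Rightarrow> 'a \<Rightarrow> 'a set" where
  "ideal_plus I a = {p + r * a | p r. p \<in> I}"

lemma ideal_plus_ideal: assumes "is_ideal I" shows "is_ideal (ideal_plus I a)"
proof -
  have "0 + 0 * a \<in> ideal_plus I a" unfolding ideal_plus_def using ideal_0[OF assms] by blast
  then have "0 \<in> ideal_plus I a" by simp
  moreover have "x + y \<in> ideal_plus I a" if xy: "x \<in> ideal_plus I a" "y \<in> ideal_plus I a" for x y
  proof -
    obtain p r where "x = p + r * a" "p \<in> I" using xy(1) unfolding ideal_plus_def by blast
    moreover obtain p' r' where "y = p' + r' * a" "p' \<in> I" using xy(2) unfolding ideal_plus_def by blast
    ultimately have "x + y = (p + p') + (r + r') * a" "p + p' \<in> I" using ideal_add[OF assms] by (auto simp: algebra_simps)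
    then show ?thesis unfolding ideal_plus_def by blast
  qed
  moreover have "t * x \<in> ideal_plus I a" if xI: "x \<in> ideal_plus I a" for x t
  proof -
    obtain p r where "x = p + r * a" "p \<in> I" using xI unfolding ideal_plus_def by blast
    then have "t * x = t * p + (t * r) * a" "t * p \<in> I" using ideal_mult[OF assms] by (auto simp: algebra_simps)
    then show ?thesis unfolding ideal_plus_def by blast
  qed
  ultimately show ?thesis unfolding is_ideal_def by blast
qed

lemma ideal_plus_sup: assumes "is_ideal I" shows "I \<subseteq> ideal_plus I a" "a \<in> ideal_plus I a"
proof -
  show "I \<subseteq> ideal_plus I a"
  proof
    fix x assume "x \<in> I"
    then have "x + 0 * a \<in> ideal_plus I a" unfolding ideal_plus_def by blast
    then show "x \<in> ideal_plus I a" by simp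
  qed
  have "0 + 1 * a \<in> ideal_plus I a" unfolding ideal_plus_def using ideal_0[OF assms] by blast
  then show "a \<in> ideal_plus I a" by simp
qed

lemma ideal_plus_prod:
  assumes I: "is_ideal I" and ab: "a * b \<in> I" and x: "x \<in> ideal_plus I a" and y: "y \<in> ideal_plus I b"
  shows "x * y \<in> I"
proof -
  obtain p r where p: "x = p + r * a" "p \<in> I" using x unfolding ideal_plus_def by blast
  obtain q t where q: "y = q + t * b" "q \<in> I" using y unfolding ideal_plus_def by blast
  have "x * y = p * y + (r * a) * q + (r * t) * (a * b)" using p q by (simp add: algebra_simps)
  moreover have "p * y \<in> I" "(r * a) * q \<in> I" "(r * t) * (a * b) \<in> I"
    using ideal_mult2[OF I p(2)] ideal_mult[OF I q(2)] ideal_mult[OF I ab] by auto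
  ultimately show ?thesis using ideal_add[OF I] by metis
qed

lemma chain_Union_ideal:
  assumes ch: "subset.chain \<A> \<C>" and ne: "\<C> \<noteq> {}" and id: "\<And>I. I \<in> \<C> \<Longrightarrow> is_ideal I"
  shows "is_ideal (\<Union>\<C>)"
proof -
  have common: "\<exists>B\<in>\<C>. F \<subseteq> B" if "finite F" "F \<subseteq> \<Union>\<C>" for F
    using finite_subset_Union_chain[OF that ne ch] by blast
  obtain I0 where "I0 \<in> \<C>" using ne by blast
  then have "0 \<in> \<Union>\<C>" using ideal_0[OF id] by blast
  moreover have "x + y \<in> \<Union>\<C>" if "x \<in> \<Union>\<C>" "y \<in> \<Union>\<C>" for x y
  proof -
    have "{x,y} \<subseteq> \<Union>\<C>" using that by blast
    then obtain B where "B \<in> \<C>" "{x,y} \<subseteq> B" using common[of "{x,y}"] by auto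
    then show ?thesis using ideal_add[OF id] by blast
  qed
  moreover have "r * x \<in> \<Union>\<C>" if "x \<in> \<Union>\<C>" for x r
    using that ideal_mult[OF id] by blast
  ultimately show ?thesis unfolding is_ideal_def by blast
qed

lemma exists_prime_avoiding:
  assumes red: "reduced_ring TYPE('a::comm_ring_1)" and y: "(y::'a) \<noteq> 0"
  shows "\<exists>P. prime_ideal P \<and> (\<forall>n. y ^ n \<notin> P)"
proof -
  have yn: "y ^ n \<noteq> 0" for n using red y unfolding reduced_ring_def by blast
  define \<A> where "\<A> = {I::'a set. is_ideal I \<and> (\<forall>n. y ^ n \<notin> I)}"
  have z: "is_ideal {0::'a}" unfolding is_ideal_def by simp
  have "\<exists>M\<in>\<A>. \<forall>X\<in>\<A>. M \<subseteq> X \<longrightarrow> X = M"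
  proof (rule subset_Zorn_nonempty)
    show "\<A> \<noteq> {}" using z yn unfolding \<A>_def by blast
    fix \<C> assume ne: "\<C> \<noteq> {}" and ch: "subset.chain \<A> \<C>"
    have sub: "\<C> \<subseteq> \<A>" using ch unfolding subset.chain_def by simp
    have "is_ideal (\<Union>\<C>)" by (rule chain_Union_ideal[OF ch ne]) (use sub in \<open>auto simp: \<A>_def\<close>)
    moreover have "\<forall>n. y ^ n \<notin> \<Union>\<C>" using sub unfolding \<A>_def by blast
    ultimately show "\<Union>\<C> \<in> \<A>" unfolding \<A>_def by blast
  qed
  then obtain P where PA: "P \<in> \<A>" and mx: "\<forall>X\<in>\<A>. P \<subseteq> X \<longrightarrow> X = P" by blast
  have P: "is_ideal P" "\<forall>n. y ^ n \<notin> P" using PA unfolding \<A>_def by auto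
  have "a \<in> P \<or> b \<in> P" if ab: "a * b \<in> P" for a b
  proof (rule ccontr)
    assume "\<not> (a \<in> P \<or> b \<in> P)"
    then have na: "a \<notin> P" and nb: "b \<notin> P" by auto
    have "ideal_plus P a \<notin> \<A>"
    proof
      assume "ideal_plus P a \<in> \<A>"
      then have "ideal_plus P a = P" using mx ideal_plus_sup(1)[OF P(1)] by blast
      then show False using ideal_plus_sup(2)[OF P(1), of a] na by simp
    qed
    then obtain n where n: "y ^ n \<in> ideal_plus P a" using ideal_plus_ideal[OF P(1)] unfolding \<A>_def by blast
    have "ideal_plus P b \<notin> \<A>"
    proof
      assume "ideal_plus P b \<in> \<A>"
      then have "ideal_plus P b = P" using mx ideal_plus_sup(1)[OF P(1)] by blast
      then show False using ideal_plus_sup(2)[OF P(1), of b] nb by simp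
    qed
    then obtain m where m: "y ^ m \<in> ideal_plus P b" using ideal_plus_ideal[OF P(1)] unfolding \<A>_def by blast
    have "y ^ n * y ^ m \<in> P" by (rule ideal_plus_prod[OF P(1) ab n m])
    then have "y ^ (n + m) \<in> P" by (simp add: power_add)
    then show False using P(2) by blast
  qed
  moreover have "P \<noteq> UNIV" using P(2) by blast
  ultimately show ?thesis using P unfolding prime_ideal_def by blast
qed

lemma exists_minimal_below:
  assumes P: "prime_ideal (P::'a::comm_ring_1 set)"
  shows "\<exists>Q. minimal_prime_ideal Q \<and> Q \<subseteq> P"
proof -
  define \<A> where "\<A> = {- Q | Q::'a set. prime_ideal Q \<and> Q \<subseteq> P}"
  have "\<exists>M\<in>\<A>. \<forall>X\<in>\<A>. M \<subseteq> X \<longrightarrow> X = M"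
  proof (rule subset_Zorn_nonempty)
    show "\<A> \<noteq> {}" using P unfolding \<A>_def by blast
    fix \<C> assume ne: "\<C> \<noteq> {}" and ch: "subset.chain \<A> \<C>"
    have sub: "\<C> \<subseteq> \<A>" using ch unfolding subset.chain_def by simp
    define \<D> where "\<D> = uminus ` \<C>"
    have Dpr: "prime_ideal Q \<and> Q \<subseteq> P" if qD: "Q \<in> \<D>" for Q
    proof -
      obtain X where "X \<in> \<C>" "Q = - X" using qD unfolding \<D>_def by blast
      then obtain Q' where "prime_ideal Q'" "Q' \<subseteq> P" "X = - Q'" using sub unfolding \<A>_def by blast
      then show ?thesis using \<open>Q = - X\<close> by simp
    qed
    have Dch: "Q1 \<subseteq> Q2 \<or> Q2 \<subseteq> Q1" if qD: "Q1 \<in> \<D>" "Q2 \<in> \<D>" for Q1 Q2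
    proof -
      obtain X1 X2 where "X1 \<in> \<C>" "X2 \<in> \<C>" "Q1 = - X1" "Q2 = - X2" using qD unfolding \<D>_def by blast
      moreover have "X1 \<subseteq> X2 \<or> X2 \<subseteq> X1" using ch \<open>X1 \<in> \<C>\<close> \<open>X2 \<in> \<C>\<close> unfolding subset.chain_def by blast
      ultimately show ?thesis by blast
    qed
    have Dne: "\<D> \<noteq> {}" using ne unfolding \<D>_def by blast
    have eq: "\<Union>\<C> = - \<Inter>\<D>" unfolding \<D>_def by auto
    have Did: "is_ideal Q" if "Q \<in> \<D>" for Q using Dpr[OF that] prime_ideal_ideal by blast
    have idl: "is_ideal (\<Inter>\<D>)"
      unfolding is_ideal_def
    proof (intro conjI ballI allI)
      show "0 \<in> \<Inter>\<D>" using Did ideal_0 by blast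
      fix x y assume "x \<in> \<Inter>\<D>" "y \<in> \<Inter>\<D>"
      then show "x + y \<in> \<Inter>\<D>" using Did ideal_add by blast
    next
      fix r x assume "x \<in> \<Inter>\<D>"
      then show "r * x \<in> \<Inter>\<D>" using Did ideal_mult by blast
    qed
    have one: "1 \<notin> \<Inter>\<D>" using Dne Dpr prime_ideal_one by blast
    have pr: "a \<in> \<Inter>\<D> \<or> b \<in> \<Inter>\<D>" if ab: "a * b \<in> \<Inter>\<D>" for a b
    proof (rule ccontr)
      assume "\<not> (a \<in> \<Inter>\<D> \<or> b \<in> \<Inter>\<D>)"
      then obtain Q1 Q2 where q: "Q1 \<in> \<D>" "a \<notin> Q1" "Q2 \<in> \<D>" "b \<notin> Q2" by blast
      from Dch[OF q(1) q(3)] show False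
      proof
        assume "Q1 \<subseteq> Q2"
        then have "b \<notin> Q1" using q by blast
        moreover have "a * b \<in> Q1" using ab q(1) by blast
        ultimately show False using prime_idealD Dpr q(1,2) by blast
      next
        assume "Q2 \<subseteq> Q1"
        then have "a \<notin> Q2" using q by blast
        moreover have "a * b \<in> Q2" using ab q(3) by blast
        ultimately show False using prime_idealD Dpr q(3,4) by blast
      qed
    qed
    have "prime_ideal (\<Inter>\<D>)" unfolding prime_ideal_def using idl one pr by blast
    moreover have "\<Inter>\<D> \<subseteq> P" using Dne Dpr by blast
    ultimately have "- \<Inter>\<D> \<in> \<A>" unfolding \<A>_def by blast
    then show "\<Union>\<C> \<in> \<A>" unfolding eq .
  qed
  then obtain M where MA: "M \<in> \<A>" and mx: "\<forall>X\<in>\<A>. M \<subseteq> X \<longrightarrow> X = M" by blast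
  obtain Q where Q: "prime_ideal Q" "Q \<subseteq> P" "M = - Q" using MA unfolding \<A>_def by blast
  have "Q' = Q" if "prime_ideal Q'" "Q' \<subseteq> Q" for Q'
  proof -
    have "- Q' \<in> \<A>" using that Q(2) unfolding \<A>_def by blast
    moreover have "M \<subseteq> - Q'" using that(2) Q(3) by blast
    ultimately have "- Q' = M" using mx by blast
    then show ?thesis using Q(3) by simp
  qed
  then have "minimal_prime_ideal Q" unfolding minimal_prime_ideal_def using Q(1) by blast
  then show ?thesis using Q(2) by blast
qed

lemma reduced_min_primes_zero:
  assumes red: "reduced_ring TYPE('a::comm_ring_1)" and y: "\<And>P. minimal_prime_ideal P \<Longrightarrow> (y::'a) \<in> P"
  shows "y = 0"
proof (rule ccontr)
  assume "y \<noteq> 0"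
  then obtain P where P: "prime_ideal P" "\<forall>n. y ^ n \<notin> P" using exists_prime_avoiding[OF red] by blast
  obtain Q where "minimal_prime_ideal Q" "Q \<subseteq> P" using exists_minimal_below[OF P(1)] by blast
  then have "y \<in> P" using y by blast
  then show False using P(2)[rule_format, of 1] by simp
qed

lemma minimal_prime_incomparable:
  assumes "minimal_prime_ideal P" "minimal_prime_ideal P'" "P \<noteq> P'"
  shows "\<exists>z. z \<in> P' \<and> z \<notin> P"
proof (rule ccontr)
  assume "\<not> (\<exists>z. z \<in> P' \<and> z \<notin> P)"
  then have "P' \<subseteq> P" by blast
  moreover have "prime_ideal P'" using assms(2) unfolding minimal_prime_ideal_def by blast
  ultimately have "P' = P" using assms(1) unfolding minimal_prime_ideal_def by blast
  then show False using assms(3) by simp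
qed

lemma ring_case_c:
  fixes s b :: "nat \<Rightarrow> 'a::comm_ring_1" and k :: nat
  assumes red: "reduced_ring TYPE('a)" and fin: "finite {P :: 'a set. minimal_prime_ideal P}"
    and N: "\<And>u. (\<Sum>i<k. u i * b i) \<in> range ((*) (\<Sum>i<k. u i * s i))"
  shows "\<exists>x. \<forall>i<k. s i * x = b i"
proof -
  have mm: "module ((*) :: 'a \<Rightarrow> 'a \<Rightarrow> 'a)" by (rule module_mult)
  have single: "\<exists>m. b i = s i * m" if "i < k" for i
    using N_two[OF mm N that that, of 1 0] by auto
  then obtain mi where mi: "\<And>i. i < k \<Longrightarrow> b i = s i * mi i" by metis
  have compat: "s j * b i = s i * b j" if "i < k" "j < k" for i j
  proof -
    have "s j * b i + (- s i) * b j \<in> range ((*) (s j * s i + - s i * s j))"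
      using N_two[OF mm N that] .
    then show ?thesis by (auto simp: mult.commute)
  qed
  define Q where "Q = {P :: 'a set. minimal_prime_ideal P}"
  define Q' where "Q' = {P \<in> Q. \<exists>i<k. s i \<notin> P}"
  have finQ': "finite Q'" using fin unfolding Q'_def Q_def by simp
  define iP where "iP P = (SOME i. i < k \<and> s i \<notin> P)" for P
  have iP: "iP P < k" "s (iP P) \<notin> P" if "P \<in> Q'" for P
  proof -
    have "\<exists>i. i < k \<and> s i \<notin> P" using that unfolding Q'_def by blast
    then have "iP P < k \<and> s (iP P) \<notin> P" unfolding iP_def by (rule someI_ex)
    then show "iP P < k" "s (iP P) \<notin> P" by auto
  qed
  define z where "z P P' = (SOME z. z \<in> P' \<and> z \<notin> P)" for P P' :: "'a set"
  have z: "z P P' \<in> P'" "z P P' \<notin> P" if "P \<in> Q'" "P' \<in> Q'" "P \<noteq> P'" for P P'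
  proof -
    have "\<exists>z. z \<in> P' \<and> z \<notin> P" using minimal_prime_incomparable that unfolding Q'_def Q_def by blast
    then have "z P P' \<in> P' \<and> z P P' \<notin> P" unfolding z_def by (rule someI_ex)
    then show "z P P' \<in> P'" "z P P' \<notin> P" by auto
  qed
  have prQ: "prime_ideal P" if "P \<in> Q" for P using that unfolding Q_def minimal_prime_ideal_def by blast
  have prQ': "prime_ideal P" if "P \<in> Q'" for P using that prQ unfolding Q'_def by blast
  define y where "y P = (\<Prod>P'\<in>Q' - {P}. z P P')" for P
  have F1: "y P \<notin> P" if "P \<in> Q'" for P
    unfolding y_def using prime_prod_notin[OF prQ'[OF that]] finQ' z(2) that by auto
  have F2: "y P'' \<in> P" if "P \<in> Q'" "P'' \<in> Q'" "P'' \<noteq> P" for P P''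
    unfolding y_def
    by (rule prod_in_ideal[OF prime_ideal_ideal[OF prQ'[OF that(1)]], of _ P]) (use finQ' that z(1) in auto)
  define u where "u i = (\<Sum>P\<in>Q'. if iP P = i then y P else 0)" for i
  define d where "d = (\<Sum>i<k. u i * s i)"
  have deq: "d = (\<Sum>P\<in>Q'. y P * s (iP P))"
  proof -
    have "d = (\<Sum>i<k. \<Sum>P\<in>Q'. if iP P = i then y P * s i else 0)"
      unfolding d_def u_def sum_distrib_right by (intro sum.cong refl) simp
    also have "\<dots> = (\<Sum>P\<in>Q'. \<Sum>i<k. if iP P = i then y P * s i else 0)" by (rule sum.swap)
    also have "\<dots> = (\<Sum>P\<in>Q'. y P * s (iP P))"
    proof (rule sum.cong[OF refl])
      fix P assume "P \<in> Q'"
      then have "iP P \<in> {..<k}" using iP by simp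
      then show "(\<Sum>i<k. if iP P = i then y P * s i else 0) = y P * s (iP P)"
        by (simp add: sum.delta)
    qed
    finally show ?thesis .
  qed
  have F3: "d \<notin> P" if P: "P \<in> Q'" for P
  proof
    assume dP: "d \<in> P"
    have I: "is_ideal P" using prime_ideal_ideal[OF prQ'[OF P]] .
    have "d = y P * s (iP P) + (\<Sum>P''\<in>Q' - {P}. y P'' * s (iP P''))"
      unfolding deq using finQ' P by (simp add: sum.remove)
    moreover have "(\<Sum>P''\<in>Q' - {P}. y P'' * s (iP P'')) \<in> P"
      by (rule ideal_sum[OF I]) (use F2 P ideal_mult2[OF I] in auto)
    ultimately have "y P * s (iP P) \<in> P" using ideal_diff[OF I dP] by (metis add_diff_cancel_right')
    then show False using prime_idealD[OF prQ'[OF P]] F1[OF P] iP(2)[OF P] by blast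
  qed
  obtain x where x: "(\<Sum>i<k. u i * b i) = d * x" using N[of u] unfolding d_def by auto
  have "s i * x = b i" if i: "i < k" for i
  proof -
    define w where "w = s i * x - b i"
    have "d * w = s i * (d * x) - d * b i" unfolding w_def by (simp add: algebra_simps)
    also have "\<dots> = s i * (\<Sum>l<k. u l * b l) - (\<Sum>l<k. u l * s l) * b i"
      using x unfolding d_def by simp
    also have "\<dots> = (\<Sum>l<k. u l * (s i * b l - s l * b i))"
      by (simp add: sum_distrib_left sum_distrib_right sum_subtractf right_diff_distrib mult.assoc mult.left_commute)
    also have "\<dots> = 0" using compat[OF _ i] by (simp add: mult.commute)
    finally have dw: "d * w = 0" .
    have "w \<in> P" if P: "minimal_prime_ideal P" for P
    proof (cases "P \<in> Q'")
      case True
      have "d * w \<in> P" using dw ideal_0[OF prime_ideal_ideal[OF prQ'[OF True]]] by simp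
      then show ?thesis using prime_idealD[OF prQ'[OF True]] F3[OF True] by blast
    next
      case False
      have PQ: "P \<in> Q" using P unfolding Q_def by simp
      then have sP: "s j \<in> P" if "j < k" for j using False that unfolding Q'_def by blast
      have I: "is_ideal P" using prime_ideal_ideal[OF prQ[OF PQ]] .
      have "s i * x \<in> P" using ideal_mult2[OF I sP[OF i]] .
      moreover have "b i \<in> P" using mi[OF i] ideal_mult2[OF I sP[OF i]] by simp
      ultimately show ?thesis unfolding w_def by (rule ideal_diff[OF I])
    qed
    then have "w = 0" using reduced_min_primes_zero[OF red] by blast
    then show ?thesis unfolding w_def by simp
  qed
  then show ?thesis by blast
qed

definition idrel :: "('a::comm_ring_1 set \<times> 'a set) set" where
  "idrel = {(I2, I1). is_ideal I1 \<and> is_ideal I2 \<and> I1 \<subset> I2}"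

lemma noeth_fg:
  assumes "noetherian_ring TYPE('a::comm_ring_1)" "is_ideal (I::'a set)"
  shows "\<exists>F. finite F \<and> F \<subseteq> I \<and> I = {\<Sum>f\<in>F. c f * f | c. True}"
  using assms(1)[unfolded noetherian_ring_def, rule_format, OF assms(2)] .

lemma noeth_span_sub:
  assumes I: "is_ideal I" and F: "F \<subseteq> I"
  shows "(\<Sum>f\<in>F. c f * f) \<in> I"
  by (rule ideal_sum[OF I]) (use F ideal_mult[OF I] in auto)

lemma wf_idrel:
  assumes noe: "noetherian_ring TYPE('a::comm_ring_1)"
  shows "wf (idrel :: ('a set \<times> 'a set) set)"
proof -
  have "\<nexists>f. \<forall>i. (f (Suc i), f i) \<in> (idrel :: ('a set \<times> 'a set) set)"
  proof
    assume "\<exists>f. \<forall>i. (f (Suc i), f i) \<in> (idrel :: ('a set \<times> 'a set) set)"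
    then obtain f :: "nat \<Rightarrow> 'a set" where f0: "\<forall>i. (f (Suc i), f i) \<in> idrel" by blast
    have f: "is_ideal (f i)" "f i \<subset> f (Suc i)" for i using f0[rule_format, of i] unfolding idrel_def by auto
    have mono: "f i \<subseteq> f j" if "i \<le> j" for i j
      using lift_Suc_mono_le[of f i j] f(2) that by (meson less_imp_le)
    define U where "U = \<Union>(range f)"
    have U: "is_ideal U" unfolding is_ideal_def
    proof (intro conjI ballI allI)
      show "0 \<in> U" unfolding U_def using ideal_0[OF f(1)] by blast
      fix x y assume "x \<in> U" "y \<in> U"
      then obtain i j where "x \<in> f i" "y \<in> f j" unfolding U_def by blast
      then have "x \<in> f (max i j)" "y \<in> f (max i j)" using mono by (meson max.cobounded1 max.cobounded2 subsetD)+
      then show "x + y \<in> U" unfolding U_def using ideal_add[OF f(1)] by blast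
    next
      fix r x assume "x \<in> U"
      then show "r * x \<in> U" unfolding U_def using ideal_mult[OF f(1)] by blast
    qed
    obtain F where F: "finite F" "F \<subseteq> U" "U = {\<Sum>f\<in>F. c f * f | c. True}"
      using noeth_fg[OF noe U] by blast
    have "\<forall>x\<in>F. \<exists>i. x \<in> f i" using F(2) unfolding U_def by blast
    then obtain idx where idx: "\<And>x. x \<in> F \<Longrightarrow> x \<in> f (idx x)" by metis
    define N where "N = Max (insert 0 (idx ` F))"
    have "F \<subseteq> f N"
    proof
      fix x assume "x \<in> F"
      then have "idx x \<le> N" unfolding N_def using F(1) by simp
      then show "x \<in> f N" using mono idx[OF \<open>x \<in> F\<close>] by blast
    qed
    then have "U \<subseteq> f N" using F(3) noeth_span_sub[OF f(1)] by blast
    moreover have "f (Suc N) \<subseteq> U" unfolding U_def by blast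
    ultimately show False using f(2)[of N] by blast
  qed
  then show ?thesis using wf_iff_no_infinite_down_chain by blast
qed

lemma ideal_max_exists:
  assumes noe: "noetherian_ring TYPE('a::comm_ring_1)" and S: "(I0::'a set) \<in> S" and id: "\<And>I. I \<in> S \<Longrightarrow> is_ideal I"
  shows "\<exists>P\<in>S. \<forall>I\<in>S. \<not> P \<subset> I"
proof -
  from wf_idrel[OF noe] have "\<exists>z\<in>S. \<forall>y. (y, z) \<in> idrel \<longrightarrow> y \<notin> S"
    unfolding wf_eq_minimal using S by blast
  then obtain P where P: "P \<in> S" "\<And>y. (y, P) \<in> idrel \<Longrightarrow> y \<notin> S" by blast
  have "\<not> P \<subset> I" if "I \<in> S" for I
  proof
    assume "P \<subset> I"
    then have "(I, P) \<in> idrel" unfolding idrel_def using id P(1) that by blast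
    then show False using P(2) that by blast
  qed
  then show ?thesis using P(1) by blast
qed

lemma max_ideal_prime:
  assumes noe: "noetherian_ring TYPE('a::comm_ring_1)" and J: "is_ideal (J::'a set)" "J \<noteq> UNIV"
  shows "\<exists>P. prime_ideal P \<and> J \<subseteq> P"
proof -
  define S where "S = {I. is_ideal I \<and> J \<subseteq> I \<and> I \<noteq> (UNIV::'a set)}"
  obtain P where P: "P \<in> S" "\<And>I. I \<in> S \<Longrightarrow> \<not> P \<subset> I"
  proof -
    have "J \<in> S" using J unfolding S_def by simp
    moreover have "\<And>I. I \<in> S \<Longrightarrow> is_ideal I" unfolding S_def by simp
    ultimately show ?thesis using ideal_max_exists[OF noe, of J S] that by blast
  qed
  have Pi: "is_ideal P" "J \<subseteq> P" "P \<noteq> UNIV" using P(1) unfolding S_def by simp_all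
  have "a \<in> P \<or> b \<in> P" if ab: "a * b \<in> P" for a b
  proof (rule ccontr)
    assume "\<not> (a \<in> P \<or> b \<in> P)"
    then have na: "a \<notin> P" and nb: "b \<notin> P" by auto
    have uni: "ideal_plus P x = UNIV" if nx: "x \<notin> P" for x
    proof (rule ccontr)
      assume ne: "ideal_plus P x \<noteq> UNIV"
      have "J \<subseteq> ideal_plus P x" using ideal_plus_sup(1)[OF Pi(1), of x] Pi(2) by (rule order_trans[rotated])
      then have "ideal_plus P x \<in> S" using ideal_plus_ideal[OF Pi(1), of x] ne unfolding S_def by simp
      moreover have "P \<subset> ideal_plus P x"
      proof -
        have "P \<subseteq> ideal_plus P x" by (rule ideal_plus_sup(1)[OF Pi(1)])
        moreover have "x \<in> ideal_plus P x" by (rule ideal_plus_sup(2)[OF Pi(1)])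
        ultimately show ?thesis using nx by (metis psubsetI)
      qed
      ultimately show False using P(2) by blast
    qed
    have ua: "ideal_plus P a = UNIV" by (rule uni[OF na])
    have ub: "ideal_plus P b = UNIV" by (rule uni[OF nb])
    have "1 * 1 \<in> P" by (rule ideal_plus_prod[OF Pi(1) ab]) (use ua ub in auto)
    then show False using ideal_UNIV[OF Pi(1)] Pi(3) by simp
  qed
  then have "prime_ideal P" unfolding prime_ideal_def using Pi by blast
  then show ?thesis using Pi(2) by blast
qed

definition prods_in :: "'a::comm_ring_1 set list \<Rightarrow> 'a set \<Rightarrow> bool" where
  "prods_in Ps I \<longleftrightarrow> (\<forall>xs. list_all2 (\<lambda>x P. x \<in> P) xs Ps \<longrightarrow> prod_list xs \<in> I)"

definition nzprimes :: "'a::comm_ring_1 set list \<Rightarrow> bool" where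
  "nzprimes Ps \<longleftrightarrow> (\<forall>P\<in>set Ps. prime_ideal P \<and> P \<noteq> {0})"

lemma prods_exist:
  assumes noe: "noetherian_ring TYPE('a::comm_ring_1)"
  shows "is_ideal (I::'a set) \<Longrightarrow> I \<noteq> {0} \<Longrightarrow> \<exists>Ps. nzprimes Ps \<and> prods_in Ps I"
proof (induction I rule: wf_induct_rule[OF wf_idrel[OF noe]])
  case (1 I)
  show ?case
  proof (cases "I = UNIV")
    case True
    then show ?thesis unfolding nzprimes_def prods_in_def by (intro exI[of _ "[]"]) simp
  next
    case False
    show ?thesis
    proof (cases "prime_ideal I")
      case True
      have "prods_in [I] I" unfolding prods_in_def by (auto simp: list_all2_Cons2)
      then show ?thesis using True 1(3) unfolding nzprimes_def by (intro exI[of _ "[I]"]) simp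
    next
      case np: False
      then obtain a b where ab: "a * b \<in> I" "a \<notin> I" "b \<notin> I"
        using 1(2) False unfolding prime_ideal_def by blast
      have big: "(ideal_plus I x, I) \<in> idrel" "ideal_plus I x \<noteq> {0}" if "x \<notin> I" for x
      proof -
        show "(ideal_plus I x, I) \<in> idrel" unfolding idrel_def
          using ideal_plus_ideal[OF 1(2)] ideal_plus_sup[OF 1(2), of x] 1(2) that by blast
        show "ideal_plus I x \<noteq> {0}" using ideal_plus_sup(1)[OF 1(2), of x] ideal_0[OF 1(2)] 1(3) by blast
      qed
      obtain Pa where Pa: "nzprimes Pa" "prods_in Pa (ideal_plus I a)"
        using 1(1)[OF big(1)[OF ab(2)] ideal_plus_ideal[OF 1(2)] big(2)[OF ab(2)]] by blast
      obtain Pb where Pb: "nzprimes Pb" "prods_in Pb (ideal_plus I b)"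
        using 1(1)[OF big(1)[OF ab(3)] ideal_plus_ideal[OF 1(2)] big(2)[OF ab(3)]] by blast
      have "nzprimes (Pa @ Pb)" using Pa(1) Pb(1) unfolding nzprimes_def by auto
      moreover have "prods_in (Pa @ Pb) I" unfolding prods_in_def
      proof (intro allI impI)
        fix xs assume "list_all2 (\<lambda>x P. x \<in> P) xs (Pa @ Pb)"
        then obtain us vs where uv: "xs = us @ vs" "list_all2 (\<lambda>x P. x \<in> P) us Pa" "list_all2 (\<lambda>x P. x \<in> P) vs Pb"
          unfolding list_all2_append2 by blast
        have "prod_list us \<in> ideal_plus I a" using Pa(2) uv(2) unfolding prods_in_def by blast
        moreover have "prod_list vs \<in> ideal_plus I b" using Pb(2) uv(3) unfolding prods_in_def by blast
        ultimately have "prod_list us * prod_list vs \<in> I" by (rule ideal_plus_prod[OF 1(2) ab(1)])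
        then show "prod_list xs \<in> I" using uv(1) by simp
      qed
      ultimately show ?thesis by blast
    qed
  qed
qed

lemma prime_prods_factor:
  assumes P: "prime_ideal P"
  shows "prods_in Ps P \<Longrightarrow> \<exists>Ps1 Q Ps2. Ps = Ps1 @ Q # Ps2 \<and> Q \<subseteq> P"
proof (induction Ps)
  case Nil
  then have "1 \<in> P" unfolding prods_in_def by simp
  then show ?case using prime_ideal_one[OF P] by simp
next
  case (Cons Q Qs)
  show ?case
  proof (cases "Q \<subseteq> P")
    case True
    then show ?thesis by (intro exI[of _ "[]"]) auto
  next
    case False
    then obtain x where x: "x \<in> Q" "x \<notin> P" by blast
    have "prods_in Qs P" unfolding prods_in_def
    proof (intro allI impI)
      fix xs assume "list_all2 (\<lambda>x P. x \<in> P) xs Qs"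
      then have "list_all2 (\<lambda>x P. x \<in> P) (x # xs) (Q # Qs)" using x by simp
      then have "x * prod_list xs \<in> P" using Cons.prems unfolding prods_in_def by fastforce
      then show "prod_list xs \<in> P" using prime_idealD[OF P] x(2) by blast
    qed
    then obtain Ps1 Q' Ps2 where "Qs = Ps1 @ Q' # Ps2" "Q' \<subseteq> P" using Cons.IH by blast
    then show ?thesis by (intro exI[of _ "Q # Ps1"]) auto
  qed
qed

lemma dd_parts:
  assumes "dedekind_domain TYPE('a::comm_ring_1)"
  shows "integral_domain TYPE('a)" "noetherian_ring TYPE('a)" "integrally_closed TYPE('a)"
    "\<And>P::'a set. prime_ideal P \<Longrightarrow> P \<noteq> {0} \<Longrightarrow> maximal_ideal P"
  using assms unfolding dedekind_domain_def by blast+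

lemma dom_cancel:
  assumes "integral_domain TYPE('a::comm_ring_1)" "(g::'a) \<noteq> 0" "x * g = y * g"
  shows "x = y"
proof -
  have "(x - y) * g = 0" using assms(3) by (simp add: algebra_simps)
  then have "x - y = 0" using assms(1,2) unfolding integral_domain_def by blast
  then show ?thesis by simp
qed

lemma principal_ideal: "is_ideal (range ((*) (a0::'a::comm_ring_1)))"
  unfolding is_ideal_def
proof (intro conjI ballI allI)
  show "0 \<in> range ((*) a0)" by (metis mult_zero_right rangeI)
  fix x y assume "x \<in> range ((*) a0)" "y \<in> range ((*) a0)"
  then obtain r t where "x = a0 * r" "y = a0 * t" by blast
  then have "x + y = a0 * (r + t)" by (simp add: algebra_simps)
  then show "x + y \<in> range ((*) a0)" by (metis rangeI)
next
  fix r x assume "x \<in> range ((*) a0)"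
  then obtain t where "x = a0 * t" by blast
  then have "r * x = a0 * (r * t)" by (simp add: algebra_simps)
  then show "r * x \<in> range ((*) a0)" by (metis rangeI)
qed

lemma in_principal_iff: "x \<in> range ((*) (a0::'a::comm_ring_1)) \<longleftrightarrow> a0 dvd x"
  unfolding dvd_def by (auto simp: eq_commute)

lemma key_K:
  assumes dd: "dedekind_domain TYPE('a::comm_ring_1)" and J: "is_ideal (J::'a set)" "J \<noteq> UNIV"
    and a0: "a0 \<in> J" "a0 \<noteq> 0"
  shows "\<exists>a b. a \<noteq> 0 \<and> \<not> a dvd b \<and> (\<forall>w\<in>J. a dvd b * w)"
proof -
  note noe = dd_parts(2)[OF dd]
  obtain P where P: "prime_ideal P" "J \<subseteq> P" using max_ideal_prime[OF noe J] by blast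
  define A0 where "A0 = range ((*) a0)"
  have "a0 * 1 \<in> A0" unfolding A0_def by (rule rangeI)
  then have A0: "is_ideal A0" "A0 \<noteq> {0}" unfolding A0_def using principal_ideal a0(2) by auto
  have A0J: "A0 \<subseteq> J" unfolding A0_def using ideal_mult2[OF J(1) a0(1)] by (auto simp: mult.commute)
  define G where "G n = (\<exists>Ps. length Ps = n \<and> nzprimes Ps \<and> prods_in Ps A0)" for n
  obtain Ps0 where "nzprimes Ps0" "prods_in Ps0 A0" using prods_exist[OF noe A0] by blast
  then have "G (length Ps0)" unfolding G_def by blast
  then have "G (LEAST n. G n)" by (rule LeastI)
  then obtain Ps where Ps: "length Ps = (LEAST n. G n)" "nzprimes Ps" "prods_in Ps A0" unfolding G_def by blast
  have "prods_in Ps P" using Ps(3) A0J P(2) unfolding prods_in_def by blast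
  then obtain Ps1 Q Ps2 where dec: "Ps = Ps1 @ Q # Ps2" "Q \<subseteq> P" using prime_prods_factor[OF P(1)] by blast
  have Qp: "prime_ideal Q" "Q \<noteq> {0}" using Ps(2) dec(1) unfolding nzprimes_def by auto
  have "maximal_ideal Q" using dd_parts(4)[OF dd Qp] .
  moreover have "is_ideal P" "P \<noteq> UNIV" using P(1) unfolding prime_ideal_def by auto
  ultimately have PQ: "P = Q" using dec(2) unfolding maximal_ideal_def by blast
  have "\<not> G (length (Ps1 @ Ps2))"
  proof (rule not_less_Least)
    show "length (Ps1 @ Ps2) < (LEAST n. G n)" using Ps(1) dec(1) by simp
  qed
  moreover have "nzprimes (Ps1 @ Ps2)" using Ps(2) dec(1) unfolding nzprimes_def by auto
  ultimately have "\<not> prods_in (Ps1 @ Ps2) A0" unfolding G_def by blast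
  then obtain xs where xs: "list_all2 (\<lambda>x P. x \<in> P) xs (Ps1 @ Ps2)" "prod_list xs \<notin> A0"
    unfolding prods_in_def by blast
  then obtain us vs where uv: "xs = us @ vs" "list_all2 (\<lambda>x P. x \<in> P) us Ps1" "list_all2 (\<lambda>x P. x \<in> P) vs Ps2"
    unfolding list_all2_append2 by blast
  define b where "b = prod_list us * prod_list vs"
  have nd: "\<not> a0 dvd b" using xs(2) uv(1) unfolding b_def A0_def in_principal_iff by simp
  have "a0 dvd b * w" if w: "w \<in> J" for w
  proof -
    have "w \<in> Q" using w P(2) PQ by blast
    then have "list_all2 (\<lambda>x P. x \<in> P) (us @ w # vs) Ps" using uv dec(1) by (simp add: list_all2_appendI)
    then have "prod_list (us @ w # vs) \<in> A0" using Ps(3) unfolding prods_in_def by blast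
    then show ?thesis unfolding A0_def in_principal_iff b_def by (simp add: mult_ac)
  qed
  then show ?thesis using nd a0(2) by blast
qed

definition spanh :: "(nat \<Rightarrow> 'a::comm_ring_1) \<Rightarrow> nat \<Rightarrow> 'a set" where
  "spanh h n = {\<Sum>i<n. c i * h i | c. True}"

lemma spanhI: "x = (\<Sum>i<n. c i * h i) \<Longrightarrow> x \<in> spanh h n"
  unfolding spanh_def by (intro CollectI exI[of _ c]) simp

lemma spanh_ideal: "is_ideal (spanh h n)"
  unfolding is_ideal_def
proof (intro conjI ballI allI)
  have "(\<Sum>i<n. 0 * h i) \<in> spanh h n" by (rule spanhI) (rule refl)
  then show "0 \<in> spanh h n" by simp
  fix x y assume "x \<in> spanh h n" "y \<in> spanh h n"
  then obtain c d where "x = (\<Sum>i<n. c i * h i)" "y = (\<Sum>i<n. d i * h i)" unfolding spanh_def by blast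
  then have "x + y = (\<Sum>i<n. (c i + d i) * h i)" by (simp add: distrib_right sum.distrib)
  then show "x + y \<in> spanh h n" by (rule spanhI)
next
  fix r x assume "x \<in> spanh h n"
  then obtain c where "x = (\<Sum>i<n. c i * h i)" unfolding spanh_def by blast
  then have "r * x = (\<Sum>i<n. (r * c i) * h i)" by (simp add: sum_distrib_left mult.assoc)
  then show "r * x \<in> spanh h n" by (rule spanhI)
qed

lemma spanh_mono: assumes "n \<le> m" shows "spanh h n \<subseteq> spanh h m"
proof
  fix x assume "x \<in> spanh h n"
  then obtain c where x: "x = (\<Sum>i<n. c i * h i)" unfolding spanh_def by blast
  define c' where "c' i = (if i < n then c i else 0)" for i
  have "(\<Sum>i<m. c' i * h i) = (\<Sum>i<n. c' i * h i)"
    by (rule sum.mono_neutral_right) (use assms in \<open>auto simp: c'_def\<close>)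
  also have "\<dots> = x" unfolding x c'_def by simp
  finally show "x \<in> spanh h m" by (intro spanhI) (rule sym)
qed

lemma spanh_gen: "h n \<in> spanh h (Suc n)"
proof -
  have "(\<Sum>i<Suc n. (if i = n then 1 else 0) * h i) = h n" by (simp add: if_distrib sum.delta cong: if_cong)
  then show ?thesis by (intro spanhI) (rule sym)
qed

lemma integral_dvd:
  assumes dd: "dedekind_domain TYPE('a::comm_ring_1)" and g: "(g::'a) \<noteq> 0" and a: "a \<noteq> 0"
    and h: "\<And>n. b ^ n * g = a ^ n * h n"
  shows "a dvd b"
proof -
  note noe = dd_parts(2)[OF dd] and dom = dd_parts(1)[OF dd] and ic = dd_parts(3)[OF dd]
  define U where "U = (\<Union>n. spanh h n)"
  have U: "is_ideal U" unfolding is_ideal_def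
  proof (intro conjI ballI allI)
    show "0 \<in> U" unfolding U_def using ideal_0[OF spanh_ideal] by blast
    fix x y assume "x \<in> U" "y \<in> U"
    then obtain i j where "x \<in> spanh h i" "y \<in> spanh h j" unfolding U_def by blast
    then have "x \<in> spanh h (max i j)" "y \<in> spanh h (max i j)" using spanh_mono by (meson max.cobounded1 max.cobounded2 subsetD)+
    then show "x + y \<in> U" unfolding U_def using ideal_add[OF spanh_ideal] by blast
  next
    fix r x assume "x \<in> U"
    then show "r * x \<in> U" unfolding U_def using ideal_mult[OF spanh_ideal] by blast
  qed
  obtain F where F: "finite F" "F \<subseteq> U" "U = {\<Sum>f\<in>F. c f * f | c. True}"
    using noeth_fg[OF noe U] by blast
  have "\<forall>x\<in>F. \<exists>i. x \<in> spanh h i" using F(2) unfolding U_def by blast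
  then obtain idx where idx: "\<And>x. x \<in> F \<Longrightarrow> x \<in> spanh h (idx x)" by metis
  define N where "N = Max (insert 0 (idx ` F))"
  have "F \<subseteq> spanh h N"
  proof
    fix x assume "x \<in> F"
    then have "idx x \<le> N" unfolding N_def using F(1) by simp
    then show "x \<in> spanh h N" using spanh_mono idx[OF \<open>x \<in> F\<close>] by blast
  qed
  then have "U \<subseteq> spanh h N" using F(3) noeth_span_sub[OF spanh_ideal] by blast
  moreover have "h N \<in> U" unfolding U_def using spanh_gen by blast
  ultimately have "h N \<in> spanh h N" by blast
  then obtain r where r: "h N = (\<Sum>i<N. r i * h i)" unfolding spanh_def by blast
  have "b ^ N * g = a ^ N * (\<Sum>i<N. r i * h i)" using h[of N] r by simp
  also have "\<dots> = (\<Sum>i<N. r i * a ^ (N - i) * (a ^ i * h i))"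
    by (simp add: sum_distrib_left mult_ac power_add[symmetric])
  also have "\<dots> = (\<Sum>i<N. r i * a ^ (N - i) * (b ^ i * g))" using h by simp
  also have "\<dots> = (\<Sum>i<N. r i * a ^ (N - i) * b ^ i * g)" by (simp add: mult.assoc)
  also have "\<dots> = (\<Sum>i<N. r i * a ^ (N - i) * b ^ i) * g" by (rule sum_distrib_right[symmetric])
  finally have "b ^ N = (\<Sum>i<N. r i * a ^ (N - i) * b ^ i)" by (rule dom_cancel[OF dom g])
  then have "b ^ N + (\<Sum>i<N. (- r i) * b ^ i * a ^ (N - i)) = 0"
    by (simp add: sum_negf mult_ac)
  moreover have "\<forall>(a'::'a) b' n c. b' \<noteq> 0 \<longrightarrow> a' ^ n + (\<Sum>i<n. c i * a' ^ i * b' ^ (n - i)) = 0 \<longrightarrow> b' dvd a'"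
    using ic unfolding integrally_closed_def .
  ultimately show ?thesis using a by (elim allE[of _ b] allE[of _ a] allE[of _ N] allE[of _ "\<lambda>i. - r i"]) simp
qed

lemma invertible:
  fixes s :: "nat \<Rightarrow> 'a::comm_ring_1" and k :: nat
  assumes dd: "dedekind_domain TYPE('a)" and i0: "i0 < k" "s i0 \<noteq> 0"
  shows "\<exists>g p. g \<noteq> 0 \<and> (\<Sum>i<k. p i * s i) = g \<and> (\<forall>i<k. \<forall>j<k. g dvd p i * s j)"
proof -
  note dom = dd_parts(1)[OF dd]
  define g where "g = s i0"
  have g0: "g \<noteq> 0" using i0 unfolding g_def by simp
  define I' where "I' = {y. \<forall>i<k. g dvd y * s i}"
  define J where "J = {w. \<exists>p. (\<forall>i<k. p i \<in> I') \<and> g * w = (\<Sum>i<k. p i * s i)}"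
  have Jintro: "w \<in> J" if "\<forall>i<k. p i \<in> I'" "g * w = (\<Sum>i<k. p i * s i)" for w p
    using that unfolding J_def by blast
  have I'0: "0 \<in> I'" unfolding I'_def by simp
  have I'add: "y1 + y2 \<in> I'" if "y1 \<in> I'" "y2 \<in> I'" for y1 y2
    using that unfolding I'_def by (simp add: distrib_right)
  have I'mult: "r * y \<in> I'" if "y \<in> I'" for y r
    using that unfolding I'_def by (simp add: mult.assoc)
  have gI': "g \<in> I'" unfolding I'_def by simp
  have single: "(\<Sum>l<k. (if l = i then y else 0) * s l) = y * s i" if "i < k" for i y
  proof -
    have "(\<Sum>l<k. (if l = i then y else 0) * s l) = (\<Sum>l<k. if l = i then y * s l else 0)"
      by (intro sum.cong refl) simp
    also have "\<dots> = y * s i" using that by (simp add: sum.delta)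
    finally show ?thesis .
  qed
  have I'J: "y \<in> J" if y: "y \<in> I'" for y
  proof -
    have "g * y = (\<Sum>l<k. (if l = i0 then y else 0) * s l)" using single[OF i0(1)] unfolding g_def by (simp add: mult.commute)
    moreover have "\<forall>l<k. (if l = i0 then y else 0) \<in> I'" using y I'0 by simp
    ultimately show ?thesis using Jintro[of "\<lambda>l. if l = i0 then y else 0" y] by simp
  qed
  have Jid: "is_ideal J" unfolding is_ideal_def
  proof (intro conjI ballI allI)
    have "g * 0 = (\<Sum>i<k. 0 * s i)" by simp
    then show "0 \<in> J" using I'0 Jintro[of "\<lambda>_. 0" 0] by simp
    fix x y assume "x \<in> J" "y \<in> J"
    then obtain p q where p: "\<forall>i<k. p i \<in> I'" "g * x = (\<Sum>i<k. p i * s i)"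
      and q: "\<forall>i<k. q i \<in> I'" "g * y = (\<Sum>i<k. q i * s i)" unfolding J_def by blast
    have "g * (x + y) = (\<Sum>i<k. (p i + q i) * s i)" using p(2) q(2) by (simp add: distrib_left distrib_right sum.distrib)
    moreover have "\<forall>i<k. p i + q i \<in> I'" using p(1) q(1) I'add by blast
    ultimately show "x + y \<in> J" using Jintro[of "\<lambda>i. p i + q i" "x + y"] by simp
  next
    fix r x assume "x \<in> J"
    then obtain p where p: "\<forall>i<k. p i \<in> I'" "g * x = (\<Sum>i<k. p i * s i)" unfolding J_def by blast
    have "g * (r * x) = r * (g * x)" by (simp add: mult.left_commute)
    also have "\<dots> = (\<Sum>i<k. (r * p i) * s i)" using p(2) by (simp add: sum_distrib_left mult.assoc)
    finally have "g * (r * x) = (\<Sum>i<k. (r * p i) * s i)" .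
    moreover have "\<forall>i<k. r * p i \<in> I'" using p(1) I'mult by blast
    ultimately show "r * x \<in> J" using Jintro[of "\<lambda>i. r * p i" "r * x"] by simp
  qed
  have "1 \<in> J"
  proof (rule ccontr)
    assume n1: "1 \<notin> J"
    have "J \<noteq> UNIV" using n1 by blast
    moreover have "g \<in> J" using I'J[OF gI'] .
    ultimately obtain a b where ab: "a \<noteq> 0" "\<not> a dvd b" "\<forall>w\<in>J. a dvd b * w"
      using key_K[OF dd Jid _ _ g0] by blast
    have stab: "\<exists>y'\<in>I'. b * y = a * y'" if y: "y \<in> I'" for y
    proof -
      have "a dvd b * y" using ab(3) I'J[OF y] by blast
      then obtain y' where y': "b * y = a * y'" by (elim dvdE)
      have "g dvd y' * s i" if i: "i < k" for i
      proof -
        have "g dvd y * s i" using y i unfolding I'_def by blast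
        then obtain w where w: "y * s i = g * w" by (elim dvdE)
        have "g * w = (\<Sum>l<k. (if l = i then y else 0) * s l)" using single[OF i] w by simp
        moreover have "\<forall>l<k. (if l = i then y else 0) \<in> I'" using y I'0 by simp
        ultimately have "w \<in> J" using Jintro[of "\<lambda>l. if l = i then y else 0" w] by simp
        then have "a dvd b * w" using ab(3) by blast
        then obtain v where v: "b * w = a * v" by (elim dvdE)
        have "(y' * s i) * a = (g * v) * a"
        proof -
          have "(y' * s i) * a = (b * y) * s i" using y' by (simp add: mult_ac)
          also have "\<dots> = b * (g * w)" using w by (simp add: mult_ac)
          also have "\<dots> = g * (b * w)" by (simp add: mult.left_commute)
          also have "\<dots> = (g * v) * a" using v by (simp add: mult_ac)
          finally show ?thesis .
        qed
        then have "y' * s i = g * v" by (rule dom_cancel[OF dom ab(1)])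
        then show ?thesis by simp
      qed
      then have "y' \<in> I'" unfolding I'_def by blast
      then show ?thesis using y' by blast
    qed
    have seq: "\<exists>h\<in>I'. b ^ n * g = a ^ n * h" for n
    proof (induction n)
      case 0 then show ?case using gI' by simp
    next
      case (Suc n)
      then obtain h where h: "h \<in> I'" "b ^ n * g = a ^ n * h" by blast
      obtain h' where h': "h' \<in> I'" "b * h = a * h'" using stab[OF h(1)] by blast
      have "b ^ Suc n * g = b * (b ^ n * g)" by (simp add: mult_ac)
      also have "\<dots> = a ^ n * (b * h)" using h(2) by (simp add: mult_ac)
      also have "\<dots> = a ^ Suc n * h'" using h'(2) by (simp add: mult_ac)
      finally show ?case using h'(1) by blast
    qed
    then obtain hh where "\<And>n. b ^ n * g = a ^ n * hh n" by metis
    then have "a dvd b" by (rule integral_dvd[OF dd g0 ab(1)])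
    then show False using ab(2) by simp
  qed
  then obtain p where p: "\<forall>i<k. p i \<in> I'" "g * 1 = (\<Sum>i<k. p i * s i)" unfolding J_def by blast
  have "\<forall>i<k. \<forall>j<k. g dvd p i * s j" using p(1) unfolding I'_def by blast
  then show ?thesis using p(2) g0 by (intro exI[of _ g] exI[of _ p]) simp
qed

lemma case_b:
  fixes sc :: "'a::comm_ring_1 \<Rightarrow> 'b::ab_group_add \<Rightarrow> 'b" and k :: nat
  assumes m: "module sc" and dd: "dedekind_domain TYPE('a)"
    and N: "\<And>u. (\<Sum>i<k. sc (u i) (b i)) \<in> range (sc (\<Sum>i<k. u i * s i))"
    and b: "\<exists>i<k. b i \<noteq> 0"
  shows "\<exists>x. \<forall>i<k. sc (s i) x = b i"
proof -
  interpret module sc by fact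
  note dom = dd_parts(1)[OF dd]
  have single: "\<exists>m. b i = sc (s i) m" if "i < k" for i
    using N_two[OF m N that that, of 1 0] by auto
  then obtain mi where mi: "\<And>i. i < k \<Longrightarrow> b i = sc (s i) (mi i)" by metis
  obtain i0 where i0: "i0 < k" "s i0 \<noteq> 0"
  proof (rule ccontr)
    assume "\<not> thesis"
    then have z: "\<forall>i<k. s i = 0" using that by blast
    obtain i1 where "i1 < k" "b i1 \<noteq> 0" using b by blast
    then show False using mi[of i1] z by simp
  qed
  obtain g p where gp: "g \<noteq> 0" "(\<Sum>i<k. p i * s i) = g" "\<And>i j. i < k \<Longrightarrow> j < k \<Longrightarrow> g dvd p i * s j"
    using invertible[where s=s and k=k, OF dd i0] by blast
  define c where "c i j = (SOME c. p i * s j = g * c)" for i j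
  have cdef: "p i * s j = g * c i j" if "i < k" "j < k" for i j
  proof -
    have "\<exists>c. p i * s j = g * c" using gp(3)[OF that] by (elim dvdE) blast
    then show ?thesis unfolding c_def by (rule someI_ex)
  qed
  have diag: "(\<Sum>i<k. c i i) = 1"
  proof -
    have "(\<Sum>i<k. c i i) * g = (\<Sum>i<k. c i i * g)" by (rule sum_distrib_right)
    also have "\<dots> = (\<Sum>i<k. g * c i i)" by (simp add: mult.commute)
    also have "\<dots> = (\<Sum>i<k. p i * s i)" using cdef by simp
    also have "\<dots> = 1 * g" using gp(2) by simp
    finally show ?thesis by (rule dom_cancel[OF dom gp(1)])
  qed
  have cross: "c i i * s j = c i j * s i" if "i < k" "j < k" for i j
  proof -
    have "(c i i * s j) * g = (g * c i i) * s j" by (simp add: mult_ac)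
    also have "\<dots> = (p i * s i) * s j" using cdef that by simp
    also have "\<dots> = (p i * s j) * s i" by (simp add: mult_ac)
    also have "\<dots> = (c i j * s i) * g" using cdef that by (simp add: mult_ac)
    finally show ?thesis by (rule dom_cancel[OF dom gp(1)])
  qed
  have compat: "(\<Sum>i<k. sc (c i j) (b i)) = b j" if j: "j < k" for j
  proof -
    define u where "u i = c i j - (if i = j then 1 else 0)" for i
    have "(\<Sum>i<k. u i * s i) = (\<Sum>i<k. c i j * s i) - (\<Sum>i<k. if i = j then s i else 0)"
      unfolding u_def by (simp add: left_diff_distrib sum_subtractf if_distrib[of "\<lambda>x. x * _"] cong: if_cong)
    also have "\<dots> = (\<Sum>i<k. c i i * s j) - s j"
    proof -
      have "(\<Sum>i<k. c i j * s i) = (\<Sum>i<k. c i i * s j)" by (intro sum.cong refl) (use cross j in \<open>simp add: eq_commute\<close>)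
      moreover have "(\<Sum>i<k. if i = j then s i else 0) = s j" using j by (simp add: sum.delta)
      ultimately show ?thesis by simp
    qed
    also have "\<dots> = 0" using diag by (simp add: sum_distrib_right[symmetric])
    finally have u0: "(\<Sum>i<k. u i * s i) = 0" .
    have "(\<Sum>i<k. sc (u i) (b i)) = (\<Sum>i<k. sc (c i j) (b i)) - (\<Sum>i<k. if i = j then b i else 0)"
      unfolding u_def by (simp add: scale_left_diff_distrib sum_subtractf if_distrib[of "\<lambda>x. sc x _"] cong: if_cong)
    also have "\<dots> = (\<Sum>i<k. sc (c i j) (b i)) - b j" using j by (simp add: sum.delta)
    finally have "(\<Sum>i<k. sc (c i j) (b i)) - b j \<in> range (sc 0)" using N[of u] u0 by metis
    then show ?thesis by auto
  qed
  define x where "x = (\<Sum>i<k. sc (c i i) (mi i))"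
  have "sc (s j) x = b j" if j: "j < k" for j
  proof -
    have "sc (s j) x = (\<Sum>i<k. sc (c i i * s j) (mi i))" unfolding x_def by (simp add: scale_sum_right mult.commute)
    also have "\<dots> = (\<Sum>i<k. sc (c i j) (sc (s i) (mi i)))"
    proof (intro sum.cong refl)
      fix i assume "i \<in> {..<k}"
      then have "c i i * s j = c i j * s i" using cross j by simp
      then show "sc (c i i * s j) (mi i) = sc (c i j) (sc (s i) (mi i))" by simp
    qed
    also have "\<dots> = (\<Sum>i<k. sc (c i j) (b i))" using mi by simp
    also have "\<dots> = b j" by (rule compat[OF j])
    finally show ?thesis .
  qed
  then show ?thesis by blast
qed

lemma case_c:
  fixes sc :: "'a::comm_ring_1 \<Rightarrow> 'b::ab_group_add \<Rightarrow> 'b" and k :: nat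
  assumes m: "module sc" and red: "reduced_ring TYPE('a)" and fin: "finite {P :: 'a set. minimal_prime_ideal P}"
    and iso: "\<exists>f :: 'b \<Rightarrow> 'a. bij f \<and> module_hom sc (*) f"
    and N: "\<And>u. (\<Sum>i<k. sc (u i) (b i)) \<in> range (sc (\<Sum>i<k. u i * s i))"
    and b: "\<exists>i<k. b i \<noteq> 0"
  shows "\<exists>x. \<forall>i<k. sc (s i) x = b i"
proof -
  interpret module sc by fact
  obtain f where f: "bij f" "module_hom sc (*) f" using iso by blast
  interpret h: module_hom sc "(*)" f by fact
  have N': "(\<Sum>i<k. u i * f (b i)) \<in> range ((*) (\<Sum>i<k. u i * s i))" for u
  proof -
    obtain y where y: "(\<Sum>i<k. sc (u i) (b i)) = sc (\<Sum>i<k. u i * s i) y" using N[of u] by blast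
    have "f (\<Sum>i<k. sc (u i) (b i)) = (\<Sum>i<k. u i * f (b i))" by (simp add: h.sum h.scale)
    moreover have "f (sc (\<Sum>i<k. u i * s i) y) = (\<Sum>i<k. u i * s i) * f y" by (simp add: h.scale)
    ultimately show ?thesis using y by (metis rangeI)
  qed
  obtain x' where x': "\<And>i. i < k \<Longrightarrow> s i * x' = f (b i)" using ring_case_c[OF red fin N'] by blast
  define x where "x = inv f x'"
  have fx: "f x = x'" unfolding x_def using f(1) by (simp add: bij_is_surj surj_f_inv_f)
  have "sc (s i) x = b i" if "i < k" for i
  proof -
    have "f (sc (s i) x) = f (b i)" using x'[OF that] fx by (simp add: h.scale)
    then show ?thesis using f(1) by (simp add: bij_is_inj inj_eq)
  qed
  then show ?thesis by blast
qed

theorem theorem5p10: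
  fixes scale :: "'a::comm_ring_1 \<Rightarrow> 'b::ab_group_add \<Rightarrow> 'b"
    and A :: "nat \<Rightarrow> nat \<Rightarrow> 'a" and k l :: nat and b :: "nat \<Rightarrow> 'b"
  assumes "module scale"
    and "(integral_domain TYPE('a) \<and> torsion_free scale)
         \<or> dedekind_domain TYPE('a)
         \<or> (reduced_ring TYPE('a) \<and> finite {P :: 'a set. minimal_prime_ideal P} \<and>
            (\<exists>f :: 'b \<Rightarrow> 'a. bij f \<and> module_hom scale (*) f))"
    and "\<exists>i<k. b i \<noteq> 0"
  shows "partition_regular scale A k l b \<longleftrightarrow> (\<exists>m. solves scale A k l b (\<lambda>_. m))"
proof -
  interpret module scale by fact
  define s where "s i = (\<Sum>j<l. A i j)" for i
  have solc: "solves scale A k l b (\<lambda>_. x) \<longleftrightarrow> (\<forall>i<k. scale (s i) x = b i)" for x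
    unfolding solves_def s_def by (simp add: scale_sum_left)
  show ?thesis
  proof
    assume pr: "partition_regular scale A k l b"
    have N: "(\<Sum>i<k. scale (u i) (b i)) \<in> range (scale (\<Sum>i<k. u i * s i))" for u
      using PR_N[OF assms(1) pr, of u] unfolding s_def .
    from assms(2) have "\<exists>x. \<forall>i<k. scale (s i) x = b i"
    proof (elim disjE conjE)
      assume "integral_domain TYPE('a)" "torsion_free scale"
      then show ?thesis using case_a[OF assms(1) _ _ N assms(3)] by blast
    next
      assume "dedekind_domain TYPE('a)"
      then show ?thesis using case_b[OF assms(1) _ N assms(3)] by blast
    next
      assume "reduced_ring TYPE('a)" "finite {P :: 'a set. minimal_prime_ideal P}"
        "\<exists>f :: 'b \<Rightarrow> 'a. bij f \<and> module_hom scale (*) f"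
      then show ?thesis using case_c[OF assms(1) _ _ _ N assms(3)] by blast
    qed
    then show "\<exists>m. solves scale A k l b (\<lambda>_. m)" using solc by blast
  next
    assume "\<exists>m. solves scale A k l b (\<lambda>_. m)"
    then obtain x where x: "solves scale A k l b (\<lambda>_. x)" by blast
    obtain i0 where i0: "i0 < k" "b i0 \<noteq> 0" using assms(3) by blast
    have "scale (s i0) x = b i0" using x solc i0 by blast
    then have xnz: "x \<noteq> 0" using i0 by auto
    have "l \<noteq> 0"
    proof
      assume "l = 0"
      then have "s i0 = 0" unfolding s_def by simp
      then show False using \<open>scale (s i0) x = b i0\<close> i0 by simp
    qed
    then show "partition_regular scale A k l b" unfolding partition_regular_def
      using x xnz by blast
  qed
qed

end
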